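(* Let $H:\mathbb{R}^{2n}\to\mathbb{R}$ be smooth, let $\phi_h$ be the time-$h$ flow of $\dot y=J^{-1}\nabla H(y)$, and let $y^*\in\mathbb{R}^{2n}$ be a point at which the $2n\times 2n$ matrix $S(y^* )\,J^{-1}\,S(y^* )$ is nonzero, where $S=\nabla^2 H$ is the Hessian of $H$. (For $n=1$ this condition is $\partial_{pp}H\,\partial_{qq}H-(\partial_{pq}H)^2\neq 0$ at $y^*$.) Then there exists $h_0>0$ such that for every $h\in(0,h_0)$ and every open neighborhood $W$ of $y^*$ there is no $C^2$ function $\hat H:W\to\mathbb{R}$ satisfying $$J^{-1}\nabla \hat H(y_0)=\frac{\phi_h(y_0)-y_0}{h}\quad\text{for all } y_0\in W,$$ i.e. satisfying $-\nabla_q\hat H(p_0,q_0)=\frac{p_1-p_0}{h}$ and $\nabla_p\hat H(p_0,q_0)=\frac{q_1-q_0}{h}$ for all $(p_0,q_0)\in W$, where $(p_1,q_1)=\phi_h(p_0,q_0)$. More precisely, the field $G_h(y)=J\,\frac{\phi_h(y)-y}{h}$ has Jacobian whose antisymmetric part equals $\frac{h}{2}S J^{-1}S+O(h^2)$ locally uniformly near $y^*$.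
   Context: Points are written $y=(p,q)$, $p,q\in\mathbb{R}^n$. $J=\begin{pmatrix}0 & I_n\\ -I_n & 0\end{pmatrix}$, so $J^{-1}\nabla H=(-\nabla_qH,\nabla_pH)$ and Hamilton's equations read $\dot p=-\nabla_qH$, $\dot q=\nabla_pH$. This is the statement that the forward-Euler-based loss $\big\|\frac{y_1-y_0}{h}-J^{-1}\nabla\hat H(y_0)\big\|^2$ cannot vanish identically on an open set. *)

theory Defs
  imports "HOL-Analysis.Analysis"
begin

text \<open>Phase space R^{2n} is modelled as (real^'n) \<times> (real^'n), a point being y = (p,q).\<close>

definition pdiff :: "'a::euclidean_space \<Rightarrow> ('a \<Rightarrow> real) \<Rightarrow> 'a \<Rightarrow> real" where
  "pdiff v f x = deriv (\<lambda>t. f (x + t *\<^sub>R v)) 0"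

fun ipd :: "'a::euclidean_space list \<Rightarrow> ('a \<Rightarrow> real) \<Rightarrow> 'a \<Rightarrow> real" where
  "ipd [] f = f"
| "ipd (v # vs) f = pdiff v (ipd vs f)"

definition Ck_on :: "nat \<Rightarrow> 'a::euclidean_space set \<Rightarrow> ('a \<Rightarrow> real) \<Rightarrow> bool" where
  "Ck_on k S f \<longleftrightarrow>
     (\<forall>vs. set vs \<subseteq> Basis \<and> length vs \<le> k \<longrightarrow> continuous_on S (ipd vs f)) \<and>
     (\<forall>vs v x. set vs \<subseteq> Basis \<and> length vs < k \<and> v \<in> Basis \<and> x \<in> S \<longrightarrow>
        (\<lambda>t. ipd vs f (x + t *\<^sub>R v)) differentiable (at 0))"

definition smooth :: "('a::euclidean_space \<Rightarrow> real) \<Rightarrow> bool" where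
  "smooth f \<longleftrightarrow> (\<forall>k. Ck_on k UNIV f)"

definition grad :: "('a::euclidean_space \<Rightarrow> real) \<Rightarrow> 'a \<Rightarrow> 'a" where
  "grad f x = (\<Sum>b\<in>Basis. pdiff b f x *\<^sub>R b)"

definition hess :: "('a::euclidean_space \<Rightarrow> real) \<Rightarrow> 'a \<Rightarrow> 'a \<Rightarrow> 'a" where
  "hess f x v = (\<Sum>b\<in>Basis. (\<Sum>c\<in>Basis. (v \<bullet> c) * pdiff c (pdiff b f) x) *\<^sub>R b)"

text \<open>J = [[0, I],[-I, 0]] and J^{-1} = [[0,-I],[I,0]] acting on (p,q).\<close>
definition Jmat :: "(real^'n) \<times> (real^'n) \<Rightarrow> (real^'n) \<times> (real^'n)" where
  "Jmat y = (snd y, - fst y)"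

definition Jinv :: "(real^'n) \<times> (real^'n) \<Rightarrow> (real^'n) \<times> (real^'n)" where
  "Jinv y = (- snd y, fst y)"

definition flow_sol :: "((real^'n) \<times> (real^'n) \<Rightarrow> real) \<Rightarrow> (real^'n) \<times> (real^'n) \<Rightarrow> real
     \<Rightarrow> (real \<Rightarrow> (real^'n) \<times> (real^'n)) \<Rightarrow> bool" where
  "flow_sol H y0 h x \<longleftrightarrow> x 0 = y0 \<and>
     (\<forall>t\<in>{0..h}. (x has_vector_derivative Jinv (grad H (x t))) (at t within {0..h}))"

text \<open>Time-h flow map phi_h(y0) (meaningful where the solution exists and is unique).\<close>
definition flow :: "((real^'n) \<times> (real^'n) \<Rightarrow> real) \<Rightarrow> real \<Rightarrow> (real^'n) \<times> (real^'n)
     \<Rightarrow> (real^'n) \<times> (real^'n)" where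
  "flow H h y0 = (THE z. \<exists>x. flow_sol H y0 h x \<and> x h = z)"

end

theory Submission
  imports Defs
begin

lemma pdiff_DERIV:
  assumes "(\<lambda>t. g (z + t *\<^sub>R v)) differentiable (at 0)"
  shows "((\<lambda>t. g (z + t *\<^sub>R v)) has_real_derivative pdiff v g z) (at 0)"
  using assms unfolding pdiff_def by (simp add: DERIV_deriv_iff_real_differentiable)

lemma pdiff_DERIV_at:
  assumes "(\<lambda>t. g ((z + \<tau> *\<^sub>R v) + t *\<^sub>R v)) differentiable (at 0)"
  shows "((\<lambda>\<tau>. g (z + \<tau> *\<^sub>R v)) has_real_derivative pdiff v g (z + \<tau> *\<^sub>R v)) (at \<tau>)"
proof -
  have "((\<lambda>t. g ((z + \<tau> *\<^sub>R v) + t *\<^sub>R v)) has_real_derivative pdiff v g (z + \<tau> *\<^sub>R v)) (at 0)"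
    by (rule pdiff_DERIV[OF assms])
  moreover have "(\<lambda>t. g ((z + \<tau> *\<^sub>R v) + t *\<^sub>R v)) = (\<lambda>t. (\<lambda>s. g (z + s *\<^sub>R v)) (t + \<tau>))"
    by (simp add: algebra_simps)
  ultimately show ?thesis using DERIV_shift[of "\<lambda>s. g (z + s *\<^sub>R v)" _ 0 \<tau>] by simp
qed

lemma mvt_line:
  fixes \<psi> :: "real \<Rightarrow> real"
  assumes "\<And>\<tau>. \<bar>\<tau>\<bar> \<le> \<bar>s\<bar> \<Longrightarrow> (\<psi> has_real_derivative \<psi>' \<tau>) (at \<tau>)"
  shows "\<exists>\<tau>. \<bar>\<tau>\<bar> \<le> \<bar>s\<bar> \<and> \<psi> s - \<psi> 0 = s * \<psi>' \<tau>"
proof (cases "s = 0")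
  case True then show ?thesis by auto
next
  case False
  show ?thesis
  proof (cases "s > 0")
    case True
    obtain z where "0 < z" "z < s" "\<psi> s - \<psi> 0 = (s - 0) * \<psi>' z"
      using MVT2[OF True, of \<psi> \<psi>'] assms by force
    then show ?thesis by (intro exI[of _ z]) auto
  next
    case f2: False
    with False have "s < 0" by auto
    obtain z where "s < z" "z < 0" "\<psi> 0 - \<psi> s = (0 - s) * \<psi>' z"
      using MVT2[OF \<open>s < 0\<close>, of \<psi> \<psi>'] assms by force
    then show ?thesis by (intro exI[of _ z]) (auto simp: algebra_simps)
  qed
qed

lemma eventually_cont_finite:
  fixes x :: "'a::metric_space"
  assumes "open S" "x \<in> S" "finite I" "\<And>i. i \<in> I \<Longrightarrow> continuous_on S (f i)" "e > 0"
  shows "\<exists>d>0. \<forall>z. dist z x < d \<longrightarrow> z \<in> S \<and> (\<forall>i\<in>I. dist (f i z) (f i x) < (e::real))"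
proof -
  have "\<forall>\<^sub>F z in at x. \<forall>i\<in>I. dist (f i z) (f i x) < e"
  proof (rule eventually_ball_finite[OF assms(3)], intro ballI)
    fix i assume "i \<in> I"
    then have "isCont (f i) x" using assms continuous_on_eq_continuous_at by blast
    then show "\<forall>\<^sub>F z in at x. dist (f i z) (f i x) < e"
      using assms(5) unfolding isCont_def by (rule tendstoD)
  qed
  moreover have "\<forall>\<^sub>F z in at x. z \<in> S"
    using assms(1,2) eventually_at_topological by blast
  ultimately have "\<forall>\<^sub>F z in at x. z \<in> S \<and> (\<forall>i\<in>I. dist (f i z) (f i x) < e)"
    by (auto elim: eventually_elim2)
  then obtain d where d: "d > 0" "\<And>z. z \<noteq> x \<Longrightarrow> dist z x < d \<Longrightarrow> z \<in> S \<and> (\<forall>i\<in>I. dist (f i z) (f i x) < e)"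
    unfolding eventually_at by auto
  show ?thesis
    using d assms(2,5) by (intro exI[of _ d]) (metis dist_self)
qed

lemma C1_has_derivative:
  fixes g :: "'a::euclidean_space \<Rightarrow> real"
  assumes S: "open S" and x: "x \<in> S"
    and dd: "\<And>z b. z \<in> S \<Longrightarrow> b \<in> Basis \<Longrightarrow> (\<lambda>t. g (z + t *\<^sub>R b)) differentiable (at 0)"
    and cont: "\<And>b. b \<in> Basis \<Longrightarrow> continuous_on S (pdiff b g)"
  shows "(g has_derivative (\<lambda>v. \<Sum>b\<in>Basis. (v \<bullet> b) * pdiff b g x)) (at x)"
  unfolding has_derivative_at_alt
proof (intro conjI allI impI)
  show "bounded_linear (\<lambda>v. \<Sum>b\<in>Basis. (v \<bullet> b) * pdiff b g x)"
    by (intro bounded_linear_sum bounded_linear_intros)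
next
  fix e :: real assume e: "e > 0"
  define N where "N = real DIM('a)"
  have N: "N \<ge> 1" unfolding N_def using DIM_positive by (simp add: Suc_le_eq)
  define e' where "e' = e / N"
  have e': "e' > 0" using e N by (simp add: e'_def)
  obtain d where d: "d > 0" and dP: "\<And>z. dist z x < d \<Longrightarrow> z \<in> S \<and> (\<forall>b\<in>Basis. dist (pdiff b g z) (pdiff b g x) < e')"
    using eventually_cont_finite[OF S x finite_Basis, of "\<lambda>b. pdiff b g", OF cont e'] by blast
  define \<delta> where "\<delta> = d / N"
  have \<delta>: "\<delta> > 0" using d N by (simp add: \<delta>_def)
  show "\<exists>d>0. \<forall>y. norm (y - x) < d \<longrightarrow>
          norm (g y - g x - (\<Sum>b\<in>Basis. ((y - x) \<bullet> b) * pdiff b g x)) \<le> e * norm (y - x)"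
  proof (intro exI[of _ \<delta>] conjI allI impI \<delta>)
    fix y assume yx: "norm (y - x) < \<delta>"
    define v where "v = y - x"
    have v: "norm v < \<delta>" using yx v_def by simp
    have key: "\<bar>g (x + (\<Sum>b\<in>T. (v \<bullet> b) *\<^sub>R b)) - g x - (\<Sum>b\<in>T. (v \<bullet> b) * pdiff b g x)\<bar>
                 \<le> real (card T) * e' * norm v
             \<and> norm (\<Sum>b\<in>T. (v \<bullet> b) *\<^sub>R b) \<le> real (card T) * norm v" if "T \<subseteq> Basis" for T
      using finite_subset[OF that finite_Basis] that
    proof (induction T rule: finite_induct)
      case empty then show ?case by simp
    next
      case (insert a T)
      have a: "a \<in> Basis" and TB: "T \<subseteq> Basis" using insert.prems by auto
      have IH1: "\<bar>g (x + (\<Sum>b\<in>T. (v \<bullet> b) *\<^sub>R b)) - g x - (\<Sum>b\<in>T. (v \<bullet> b) * pdiff b g x)\<bar>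
                 \<le> real (card T) * e' * norm v"
        and IH2: "norm (\<Sum>b\<in>T. (v \<bullet> b) *\<^sub>R b) \<le> real (card T) * norm v"
        using insert.IH[OF TB] by auto
      have cardT: "real (card T) + 1 \<le> N"
      proof -
        have "card (insert a T) \<le> DIM('a)" using insert.prems by (simp add: card_mono)
        then show ?thesis using insert.hyps by (simp add: N_def)
      qed
      define p where "p = x + (\<Sum>b\<in>T. (v \<bullet> b) *\<^sub>R b)"
      define s where "s = v \<bullet> a"
      have sv: "\<bar>s\<bar> \<le> norm v" unfolding s_def using Basis_le_norm[OF a] by simp
      have near: "dist (p + \<tau> *\<^sub>R a) x < d" if "\<bar>\<tau>\<bar> \<le> \<bar>s\<bar>" for \<tau>
      proof -
        have "dist (p + \<tau> *\<^sub>R a) x = norm ((\<Sum>b\<in>T. (v \<bullet> b) *\<^sub>R b) + \<tau> *\<^sub>R a)"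
          by (simp add: p_def dist_norm algebra_simps)
        also have "\<dots> \<le> norm (\<Sum>b\<in>T. (v \<bullet> b) *\<^sub>R b) + \<bar>\<tau>\<bar>"
          using norm_triangle_ineq[of "(\<Sum>b\<in>T. (v \<bullet> b) *\<^sub>R b)" "\<tau> *\<^sub>R a"] a by simp
        also have "\<dots> \<le> real (card T) * norm v + norm v" using IH2 that sv by linarith
        also have "\<dots> = (real (card T) + 1) * norm v" by (simp add: algebra_simps)
        also have "\<dots> \<le> N * norm v" using cardT by (intro mult_right_mono) auto
        also have "\<dots> < N * \<delta>" using v N by simp
        also have "\<dots> = d" using N by (simp add: \<delta>_def)
        finally show ?thesis .
      qed
      have der: "((\<lambda>\<tau>. g (p + \<tau> *\<^sub>R a)) has_real_derivative pdiff a g (p + \<tau> *\<^sub>R a)) (at \<tau>)"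
        if "\<bar>\<tau>\<bar> \<le> \<bar>s\<bar>" for \<tau>
        by (rule pdiff_DERIV_at, rule dd) (use dP[OF near[OF that]] a in auto)
      obtain \<tau> where \<tau>: "\<bar>\<tau>\<bar> \<le> \<bar>s\<bar>" and mv: "g (p + s *\<^sub>R a) - g (p + 0 *\<^sub>R a) = s * pdiff a g (p + \<tau> *\<^sub>R a)"
        using mvt_line[of s "\<lambda>\<tau>. g (p + \<tau> *\<^sub>R a)", OF der] by blast
      have close: "\<bar>pdiff a g (p + \<tau> *\<^sub>R a) - pdiff a g x\<bar> < e'"
        using dP[OF near[OF \<tau>]] a by (auto simp: dist_real_def)
      have sum1: "(\<Sum>b\<in>insert a T. (v \<bullet> b) *\<^sub>R b) = s *\<^sub>R a + (\<Sum>b\<in>T. (v \<bullet> b) *\<^sub>R b)"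
        using insert.hyps by (simp add: s_def)
      have sum2: "(\<Sum>b\<in>insert a T. (v \<bullet> b) * pdiff b g x) = s * pdiff a g x + (\<Sum>b\<in>T. (v \<bullet> b) * pdiff b g x)"
        using insert.hyps by (simp add: s_def)
      have pt: "x + (\<Sum>b\<in>insert a T. (v \<bullet> b) *\<^sub>R b) = p + s *\<^sub>R a"
        by (simp add: sum1 p_def algebra_simps)
      have "\<bar>s * pdiff a g (p + \<tau> *\<^sub>R a) - s * pdiff a g x\<bar> \<le> norm v * e'"
      proof -
        have "\<bar>s * pdiff a g (p + \<tau> *\<^sub>R a) - s * pdiff a g x\<bar> = \<bar>s\<bar> * \<bar>pdiff a g (p + \<tau> *\<^sub>R a) - pdiff a g x\<bar>"
          by (simp add: abs_mult[symmetric] algebra_simps)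
        also have "\<dots> \<le> norm v * e'" using sv close
          by (intro mult_mono) auto
        finally show ?thesis .
      qed
      then have A1: "\<bar>g (x + (\<Sum>b\<in>insert a T. (v \<bullet> b) *\<^sub>R b)) - g x - (\<Sum>b\<in>insert a T. (v \<bullet> b) * pdiff b g x)\<bar>
                 \<le> real (card T) * e' * norm v + norm v * e'"
        using IH1 mv unfolding pt sum2 p_def by (simp add: abs_le_iff)
      have A2: "norm (\<Sum>b\<in>insert a T. (v \<bullet> b) *\<^sub>R b) \<le> real (card T) * norm v + norm v"
        unfolding sum1 using norm_triangle_ineq[of "s *\<^sub>R a" "(\<Sum>b\<in>T. (v \<bullet> b) *\<^sub>R b)"] IH2 sv a by simp
      show ?case using A1 A2 insert.hyps by (simp add: algebra_simps)
    qed
    have "\<bar>g (x + v) - g x - (\<Sum>b\<in>Basis. (v \<bullet> b) * pdiff b g x)\<bar> \<le> N * e' * norm v"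
      using key[OF order_refl] by (simp add: euclidean_representation N_def)
    also have "N * e' * norm v = e * norm v" using N by (simp add: e'_def)
    finally show "norm (g y - g x - (\<Sum>b\<in>Basis. ((y - x) \<bullet> b) * pdiff b g x)) \<le> e * norm (y - x)"
      by (simp add: v_def)
  qed
qed

lemma clairaut_aux:
  fixes g :: "'a::euclidean_space \<Rightarrow> real"
  assumes u: "u \<in> Basis" and w: "w \<in> Basis" and s: "s > 0"
    and inS: "\<And>z. dist z x \<le> 2 * s \<Longrightarrow> z \<in> S"
    and dd: "\<And>z b. z \<in> S \<Longrightarrow> b \<in> Basis \<Longrightarrow> (\<lambda>t. g (z + t *\<^sub>R b)) differentiable (at 0)"
    and dpg: "\<And>z b c. z \<in> S \<Longrightarrow> b \<in> Basis \<Longrightarrow> c \<in> Basis \<Longrightarrow> (\<lambda>t. pdiff b g (z + t *\<^sub>R c)) differentiable (at 0)"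
  shows "\<exists>\<xi>. dist \<xi> x \<le> 2 * s \<and>
     g (x + s *\<^sub>R u + s *\<^sub>R w) - g (x + s *\<^sub>R u) - g (x + s *\<^sub>R w) + g x = s^2 * pdiff w (pdiff u g) \<xi>"
proof -
  have pS: "x + a *\<^sub>R u + b *\<^sub>R w \<in> S" if "\<bar>a\<bar> \<le> s" "\<bar>b\<bar> \<le> s" for a b
  proof (rule inS)
    have "dist (x + a *\<^sub>R u + b *\<^sub>R w) x = norm (a *\<^sub>R u + b *\<^sub>R w)" by (simp add: dist_norm)
    also have "\<dots> \<le> \<bar>a\<bar> + \<bar>b\<bar>" using norm_triangle_ineq[of "a *\<^sub>R u" "b *\<^sub>R w"] u w by simp
    finally show "dist (x + a *\<^sub>R u + b *\<^sub>R w) x \<le> 2 * s" using that by linarith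
  qed
  define \<phi> where "\<phi> \<tau> = g ((x + s *\<^sub>R w) + \<tau> *\<^sub>R u) - g (x + \<tau> *\<^sub>R u)" for \<tau>
  have der\<phi>: "(\<phi> has_real_derivative (pdiff u g ((x + s *\<^sub>R w) + \<tau> *\<^sub>R u) - pdiff u g (x + \<tau> *\<^sub>R u))) (at \<tau>)"
    if "\<bar>\<tau>\<bar> \<le> \<bar>s\<bar>" for \<tau>
    unfolding \<phi>_def
  proof (intro DERIV_diff pdiff_DERIV_at dd u)
    show "x + s *\<^sub>R w + \<tau> *\<^sub>R u \<in> S" using pS[of \<tau> s] that s by (simp add: algebra_simps)
    show "x + \<tau> *\<^sub>R u \<in> S" using pS[of \<tau> 0] that s by simp
  qed
  obtain \<tau>1 where \<tau>1: "\<bar>\<tau>1\<bar> \<le> \<bar>s\<bar>" and mv1: "\<phi> s - \<phi> 0 = s * (pdiff u g ((x + s *\<^sub>R w) + \<tau>1 *\<^sub>R u) - pdiff u g (x + \<tau>1 *\<^sub>R u))"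
    using mvt_line[OF der\<phi>] by blast
  define \<psi> where "\<psi> \<sigma> = pdiff u g ((x + \<tau>1 *\<^sub>R u) + \<sigma> *\<^sub>R w)" for \<sigma>
  have der\<psi>: "(\<psi> has_real_derivative pdiff w (pdiff u g) ((x + \<tau>1 *\<^sub>R u) + \<sigma> *\<^sub>R w)) (at \<sigma>)"
    if "\<bar>\<sigma>\<bar> \<le> \<bar>s\<bar>" for \<sigma>
    unfolding \<psi>_def
  proof (intro pdiff_DERIV_at dpg u w)
    show "x + \<tau>1 *\<^sub>R u + \<sigma> *\<^sub>R w \<in> S" using pS[of \<tau>1 \<sigma>] that \<tau>1 s by simp
  qed
  obtain \<sigma>1 where \<sigma>1: "\<bar>\<sigma>1\<bar> \<le> \<bar>s\<bar>" and mv2: "\<psi> s - \<psi> 0 = s * pdiff w (pdiff u g) ((x + \<tau>1 *\<^sub>R u) + \<sigma>1 *\<^sub>R w)"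
    using mvt_line[OF der\<psi>] by blast
  have e1: "\<psi> s - \<psi> 0 = pdiff u g ((x + s *\<^sub>R w) + \<tau>1 *\<^sub>R u) - pdiff u g (x + \<tau>1 *\<^sub>R u)"
    unfolding \<psi>_def by (simp add: algebra_simps)
  have e2: "\<phi> s - \<phi> 0 = g (x + s *\<^sub>R u + s *\<^sub>R w) - g (x + s *\<^sub>R u) - g (x + s *\<^sub>R w) + g x"
    unfolding \<phi>_def by (simp add: algebra_simps)
  show ?thesis
  proof (intro exI conjI)
    show "dist ((x + \<tau>1 *\<^sub>R u) + \<sigma>1 *\<^sub>R w) x \<le> 2 * s"
    proof -
      have "dist (x + \<tau>1 *\<^sub>R u + \<sigma>1 *\<^sub>R w) x = norm (\<tau>1 *\<^sub>R u + \<sigma>1 *\<^sub>R w)" by (simp add: dist_norm)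
      also have "\<dots> \<le> \<bar>\<tau>1\<bar> + \<bar>\<sigma>1\<bar>" using norm_triangle_ineq[of "\<tau>1 *\<^sub>R u" "\<sigma>1 *\<^sub>R w"] u w by simp
      finally show ?thesis using \<tau>1 \<sigma>1 s by linarith
    qed
    show "g (x + s *\<^sub>R u + s *\<^sub>R w) - g (x + s *\<^sub>R u) - g (x + s *\<^sub>R w) + g x
        = s\<^sup>2 * pdiff w (pdiff u g) ((x + \<tau>1 *\<^sub>R u) + \<sigma>1 *\<^sub>R w)"
      using mv1 mv2 e1 e2 by (simp add: power2_eq_square)
  qed
qed

lemma clairaut:
  fixes g :: "'a::euclidean_space \<Rightarrow> real"
  assumes S: "open S" and x: "x \<in> S" and u: "u \<in> Basis" and w: "w \<in> Basis"
    and dd: "\<And>z b. z \<in> S \<Longrightarrow> b \<in> Basis \<Longrightarrow> (\<lambda>t. g (z + t *\<^sub>R b)) differentiable (at 0)"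
    and dpg: "\<And>z b c. z \<in> S \<Longrightarrow> b \<in> Basis \<Longrightarrow> c \<in> Basis \<Longrightarrow> (\<lambda>t. pdiff b g (z + t *\<^sub>R c)) differentiable (at 0)"
    and cont: "\<And>b c. b \<in> Basis \<Longrightarrow> c \<in> Basis \<Longrightarrow> continuous_on S (pdiff c (pdiff b g))"
  shows "pdiff w (pdiff u g) x = pdiff u (pdiff w g) x"
proof (rule ccontr)
  assume ne: "pdiff w (pdiff u g) x \<noteq> pdiff u (pdiff w g) x"
  define e where "e = \<bar>pdiff w (pdiff u g) x - pdiff u (pdiff w g) x\<bar> / 2"
  have e: "e > 0" using ne by (simp add: e_def)
  define f where "f i = (if i then pdiff w (pdiff u g) else pdiff u (pdiff w g))" for i
  obtain d where d: "d > 0" and dP: "\<And>z. dist z x < d \<Longrightarrow> z \<in> S \<and> (\<forall>i\<in>UNIV. dist (f i z) (f i x) < e)"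
  proof -
    have "\<And>i. continuous_on S (f i)" unfolding f_def using cont u w by auto
    then show ?thesis using eventually_cont_finite[OF S x, of "UNIV::bool set" f, OF _ _ e] that by auto
  qed
  define s where "s = d / 3"
  have s: "s > 0" using d by (simp add: s_def)
  have inS: "\<And>z. dist z x \<le> 2 * s \<Longrightarrow> z \<in> S" using dP d by (simp add: s_def)
  obtain \<xi>1 where \<xi>1: "dist \<xi>1 x \<le> 2 * s" and E1:
    "g (x + s *\<^sub>R u + s *\<^sub>R w) - g (x + s *\<^sub>R u) - g (x + s *\<^sub>R w) + g x = s^2 * pdiff w (pdiff u g) \<xi>1"
    using clairaut_aux[OF u w s inS dd dpg] by blast
  obtain \<xi>2 where \<xi>2: "dist \<xi>2 x \<le> 2 * s" and E2:
    "g (x + s *\<^sub>R w + s *\<^sub>R u) - g (x + s *\<^sub>R w) - g (x + s *\<^sub>R u) + g x = s^2 * pdiff u (pdiff w g) \<xi>2"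
    using clairaut_aux[OF w u s inS dd dpg] by blast
  have "s^2 * pdiff w (pdiff u g) \<xi>1 = s^2 * pdiff u (pdiff w g) \<xi>2"
    using E1 E2 by (simp add: algebra_simps)
  then have eq: "pdiff w (pdiff u g) \<xi>1 = pdiff u (pdiff w g) \<xi>2" using s by simp
  have "dist \<xi>1 x < d" "dist \<xi>2 x < d" using \<xi>1 \<xi>2 d by (auto simp: s_def)
  then have "\<bar>pdiff w (pdiff u g) \<xi>1 - pdiff w (pdiff u g) x\<bar> < e"
     "\<bar>pdiff u (pdiff w g) \<xi>2 - pdiff u (pdiff w g) x\<bar> < e"
    using dP[of \<xi>1] dP[of \<xi>2] unfolding dist_real_def
    by (metis (full_types) UNIV_I f_def)+
  then show False using eq by (simp add: e_def abs_if split: if_splits)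
qed

lemma ck_cont: "Ck_on k S g \<Longrightarrow> set vs \<subseteq> Basis \<Longrightarrow> length vs \<le> k \<Longrightarrow> continuous_on S (ipd vs g)"
  unfolding Ck_on_def by blast

lemma ck_dd: "Ck_on k S g \<Longrightarrow> set vs \<subseteq> Basis \<Longrightarrow> length vs < k \<Longrightarrow> b \<in> Basis \<Longrightarrow> x \<in> S \<Longrightarrow>
   (\<lambda>t. ipd vs g (x + t *\<^sub>R b)) differentiable (at 0)"
  unfolding Ck_on_def by blast

lemma ck_mono: "Ck_on k S g \<Longrightarrow> j \<le> k \<Longrightarrow> Ck_on j S g"
  unfolding Ck_on_def by (meson le_trans order.strict_trans2)

lemma ck2_pdiff_deriv:
  assumes "Ck_on 2 S g" "open S" "x \<in> S" "b \<in> Basis"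
  shows "(pdiff b g has_derivative (\<lambda>v. \<Sum>c\<in>Basis. (v \<bullet> c) * pdiff c (pdiff b g) x)) (at x)"
proof (rule C1_has_derivative[OF assms(2,3)])
  show "(\<lambda>t. pdiff b g (z + t *\<^sub>R c)) differentiable at 0" if "z \<in> S" "c \<in> Basis" for z c
    using ck_dd[OF assms(1), of "[b]" c z] assms(4) that by simp
  show "continuous_on S (pdiff c (pdiff b g))" if "c \<in> Basis" for c
    using ck_cont[OF assms(1), of "[c,b]"] assms(4) that by simp
qed

lemma grad_deriv:
  assumes "Ck_on 2 S g" "open S" "x \<in> S"
  shows "(grad g has_derivative hess g x) (at x)"
proof -
  have "((\<lambda>y. \<Sum>b\<in>Basis. pdiff b g y *\<^sub>R b) has_derivative
         (\<lambda>v. \<Sum>b\<in>Basis. (\<Sum>c\<in>Basis. (v \<bullet> c) * pdiff c (pdiff b g) x) *\<^sub>R b)) (at x)"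
    by (intro has_derivative_sum has_derivative_scaleR_left ck2_pdiff_deriv[OF assms])
  then show ?thesis unfolding grad_def[abs_def] hess_def[abs_def] by simp
qed

lemma hess_entry_sym:
  assumes "Ck_on 2 S g" "open S" "x \<in> S" "b \<in> Basis" "c \<in> Basis"
  shows "pdiff c (pdiff b g) x = pdiff b (pdiff c g) x"
proof (rule clairaut[OF assms(2,3,4,5)])
  show "(\<lambda>t. g (z + t *\<^sub>R b)) differentiable at 0" if "z \<in> S" "b \<in> Basis" for z b
    using ck_dd[OF assms(1), of "[]" b z] that by simp
  show "(\<lambda>t. pdiff b g (z + t *\<^sub>R c)) differentiable at 0" if "z \<in> S" "b \<in> Basis" "c \<in> Basis" for z b c
    using ck_dd[OF assms(1), of "[b]" c z] that by simp
  show "continuous_on S (pdiff c (pdiff b g))" if "b \<in> Basis" "c \<in> Basis" for b c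
    using ck_cont[OF assms(1), of "[c,b]"] that by simp
qed

lemma hess_inner:
  "hess g x v \<bullet> w = (\<Sum>b\<in>Basis. \<Sum>c\<in>Basis. (v \<bullet> c) * (w \<bullet> b) * pdiff c (pdiff b g) x)"
  unfolding hess_def inner_sum_left inner_scaleR_left sum_distrib_right by (simp add: inner_commute ac_simps)

lemma hess_sym:
  assumes "Ck_on 2 S g" "open S" "x \<in> S"
  shows "hess g x v \<bullet> w = v \<bullet> hess g x w"
proof -
  have "hess g x v \<bullet> w = (\<Sum>b\<in>Basis. \<Sum>c\<in>Basis. (v \<bullet> c) * (w \<bullet> b) * pdiff c (pdiff b g) x)"
    by (rule hess_inner)
  also have "\<dots> = (\<Sum>b\<in>Basis. \<Sum>c\<in>Basis. (v \<bullet> c) * (w \<bullet> b) * pdiff b (pdiff c g) x)"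
    using hess_entry_sym[OF assms] by (intro sum.cong refl) simp
  also have "\<dots> = (\<Sum>c\<in>Basis. \<Sum>b\<in>Basis. (w \<bullet> b) * (v \<bullet> c) * pdiff b (pdiff c g) x)"
    by (subst sum.swap) (simp add: mult.commute)
  also have "\<dots> = hess g x w \<bullet> v" by (rule hess_inner[symmetric])
  finally show ?thesis by (simp add: inner_commute)
qed

lemma hess_linear: "linear (hess g x)"
  unfolding hess_def
  by (intro linearI) (simp_all add: inner_add_left sum.distrib algebra_simps scaleR_sum_right sum_distrib_left)

lemma C1_lipschitz_cball:
  fixes g :: "'a::euclidean_space \<Rightarrow> real"
  assumes dd: "\<And>z b. b \<in> Basis \<Longrightarrow> (\<lambda>t. g (z + t *\<^sub>R b)) differentiable (at 0)"
    and cont: "\<And>b. b \<in> Basis \<Longrightarrow> continuous_on UNIV (pdiff b g)"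
  shows "\<exists>L. \<forall>y\<in>cball 0 R. \<forall>z\<in>cball 0 R. \<bar>g y - g z\<bar> \<le> L * norm (y - z)"
proof -
  have der: "(g has_derivative (\<lambda>v. \<Sum>b\<in>Basis. (v \<bullet> b) * pdiff b g x)) (at x)" for x
    by (rule C1_has_derivative[OF open_UNIV UNIV_I]) (auto intro: dd cont)
  have "continuous_on (cball 0 R) (\<lambda>y. \<Sum>b\<in>Basis. \<bar>pdiff b g y\<bar>)"
    using cont by (intro continuous_intros continuous_on_subset[OF cont]) auto
  then have "bounded ((\<lambda>y. \<Sum>b\<in>Basis. \<bar>pdiff b g y\<bar>) ` cball 0 R)"
    by (intro compact_imp_bounded compact_continuous_image compact_cball)
  then obtain M where M0: "\<And>u. u \<in> (\<lambda>y. \<Sum>b\<in>Basis. \<bar>pdiff b g y\<bar>) ` cball 0 R \<Longrightarrow> norm u \<le> M"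
    unfolding bounded_pos by blast
  have M: "(\<Sum>b\<in>Basis. \<bar>pdiff b g y\<bar>) \<le> M" if "y \<in> cball 0 R" for y
    using M0[of "\<Sum>b\<in>Basis. \<bar>pdiff b g y\<bar>"] that by auto
  show ?thesis
  proof (intro exI ballI)
    fix y z assume y: "y \<in> cball (0::'a) R" and z: "z \<in> cball (0::'a) R"
    have "norm (g y - g z) \<le> M * norm (y - z)"
    proof (rule differentiable_bound[OF convex_cball])
      show "(g has_derivative (\<lambda>v. \<Sum>b\<in>Basis. (v \<bullet> b) * pdiff b g x)) (at x within cball 0 R)" for x
        using der has_derivative_at_withinI by blast
      show "onorm (\<lambda>v. \<Sum>b\<in>Basis. (v \<bullet> b) * pdiff b g x) \<le> M" if "x \<in> cball 0 R" for x
      proof (rule order_trans[OF onorm_le M[OF that]])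
        fix v :: 'a
        have "norm (\<Sum>b\<in>Basis. (v \<bullet> b) * pdiff b g x) \<le> (\<Sum>b\<in>Basis. \<bar>(v \<bullet> b) * pdiff b g x\<bar>)"
          by (metis real_norm_def sum_abs)
        also have "\<dots> \<le> (\<Sum>b\<in>Basis. norm v * \<bar>pdiff b g x\<bar>)"
          by (intro sum_mono) (simp add: abs_mult Basis_le_norm mult_right_mono)
        also have "\<dots> = (\<Sum>b\<in>Basis. \<bar>pdiff b g x\<bar>) * norm v" by (simp add: sum_distrib_left mult.commute)
        finally show "norm (\<Sum>b\<in>Basis. (v \<bullet> b) * pdiff b g x) \<le> (\<Sum>b\<in>Basis. \<bar>pdiff b g x\<bar>) * norm v" .
      qed
    qed (use y z in auto)
    then show "\<bar>g y - g z\<bar> \<le> M * norm (y - z)" by simp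
  qed
qed

lemma gronwall:
  fixes u u' :: "real \<Rightarrow> real"
  assumes T: "T \<ge> 0" and cu: "continuous_on {0..T} u"
    and du: "\<And>t. 0 < t \<Longrightarrow> t < T \<Longrightarrow> (u has_real_derivative u' t) (at t)"
    and le: "\<And>t. 0 < t \<Longrightarrow> t < T \<Longrightarrow> u' t \<le> a * u t + b"
    and a: "a \<ge> 0" and b: "b \<ge> 0"
  shows "u T \<le> exp (a * T) * (u 0 + b * T)"
proof -
  define g where "g t = exp (- a * t) * u t - b * t" for t
  have "g T \<le> g 0"
  proof (rule DERIV_nonpos_imp_decreasing_open[OF T])
    fix t assume t: "0 < t" "t < T"
    have "(g has_real_derivative (exp (- a * t) * (- a) * u t + exp (- a * t) * u' t - b)) (at t)"
      unfolding g_def[abs_def] by (auto intro!: derivative_eq_intros du t)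
    moreover have "exp (- a * t) * (- a) * u t + exp (- a * t) * u' t - b \<le> 0"
    proof -
      have "exp (- a * t) * (- a) * u t + exp (- a * t) * u' t = exp (- a * t) * (u' t - a * u t)"
        by (simp add: algebra_simps)
      also have "\<dots> \<le> exp (- a * t) * b" using le[OF t] by (intro mult_left_mono) auto
      also have "\<dots> \<le> 1 * b" using a t b by (intro mult_right_mono) auto
      finally show ?thesis by simp
    qed
    ultimately show "\<exists>y. (g has_real_derivative y) (at t) \<and> y \<le> 0" by blast
  next
    show "continuous_on {0..T} g" unfolding g_def by (intro continuous_intros cu)
  qed
  then have "exp (- a * T) * u T \<le> u 0 + b * T" by (simp add: g_def)
  then have "exp (a * T) * (exp (- a * T) * u T) \<le> exp (a * T) * (u 0 + b * T)"
    by (intro mult_left_mono) auto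
  then show ?thesis by (simp add: exp_minus_inverse mult.assoc[symmetric] exp_add[symmetric])
qed

lemma vd_interior:
  assumes "(x has_vector_derivative d) (at t within {0..h})" "0 < t" "t < h"
  shows "(x has_vector_derivative d) (at t)"
proof -
  have "t \<in> interior {0..h}" using assms by simp
  then show ?thesis using assms(1) at_within_interior by metis
qed

lemma sq_norm_deriv:
  fixes f :: "real \<Rightarrow> 'a::real_inner"
  assumes "(f has_vector_derivative f') (at t)"
  shows "((\<lambda>t. (norm (f t))^2) has_real_derivative 2 * (f t \<bullet> f')) (at t)"
proof -
  have "((\<lambda>t. f t \<bullet> f t) has_derivative (\<lambda>s. f t \<bullet> (s *\<^sub>R f') + (s *\<^sub>R f') \<bullet> f t)) (at t)"
    using assms unfolding has_vector_derivative_def by (intro derivative_intros) auto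
  then have "((\<lambda>t. f t \<bullet> f t) has_derivative (\<lambda>s. s * (2 * (f t \<bullet> f')))) (at t)"
    by (rule has_derivative_eq_rhs) (auto simp: inner_commute algebra_simps fun_eq_iff)
  then have "((\<lambda>t. f t \<bullet> f t) has_derivative (*) (2 * (f t \<bullet> f'))) (at t)"
    by (rule has_derivative_eq_rhs) (simp add: fun_eq_iff mult.commute)
  then show ?thesis by (simp add: has_field_derivative_def power2_norm_eq_inner)
qed

lemma vd_continuous_on:
  assumes "\<forall>t\<in>{0..h}. (x has_vector_derivative d t) (at t within {0..h})"
  shows "continuous_on {0..h} x"
  using assms continuous_on_eq_continuous_within has_vector_derivative_continuous by blast

lemma continuous_bounded_interval:
  fixes x :: "real \<Rightarrow> 'a::real_normed_vector"
  assumes "continuous_on {0..h} x"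
  shows "\<exists>R. \<forall>t\<in>{0..h}. norm (x t) \<le> R"
proof -
  have "bounded (x ` {0..h})" by (intro compact_imp_bounded compact_continuous_image assms) auto
  then show ?thesis unfolding bounded_iff by blast
qed

lemma ode_unique:
  fixes G :: "real \<Rightarrow> 'a::euclidean_space \<Rightarrow> 'a"
  assumes lip: "\<And>R. \<exists>L. \<forall>t\<in>{0..h}. \<forall>x\<in>cball 0 R. \<forall>y\<in>cball 0 R. norm (G t x - G t y) \<le> L * norm (x - y)"
    and d1: "\<forall>t\<in>{0..h}. (x1 has_vector_derivative G t (x1 t)) (at t within {0..h})"
    and d2: "\<forall>t\<in>{0..h}. (x2 has_vector_derivative G t (x2 t)) (at t within {0..h})"
    and i: "x1 0 = x2 0" and t: "t \<in> {0..h}"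
  shows "x1 t = x2 t"
proof -
  have c1: "continuous_on {0..h} x1" and c2: "continuous_on {0..h} x2"
    using vd_continuous_on[OF d1] vd_continuous_on[OF d2] by auto
  obtain R1 where R1: "\<forall>t\<in>{0..h}. norm (x1 t) \<le> R1" using continuous_bounded_interval[OF c1] by blast
  obtain R2 where R2: "\<forall>t\<in>{0..h}. norm (x2 t) \<le> R2" using continuous_bounded_interval[OF c2] by blast
  obtain L where L: "\<forall>t\<in>{0..h}. \<forall>x\<in>cball 0 (max R1 R2). \<forall>y\<in>cball 0 (max R1 R2). norm (G t x - G t y) \<le> L * norm (x - y)"
    using lip by blast
  define u where "u s = (norm (x1 s - x2 s))^2" for s
  have "u t \<le> exp (2 * \<bar>L\<bar> * t) * (u 0 + 0 * t)"
  proof (rule gronwall)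
    show "continuous_on {0..t} u" unfolding u_def
      using t by (intro continuous_intros continuous_on_subset[OF c1] continuous_on_subset[OF c2]) auto
    fix s assume s: "0 < s" "s < t"
    then have sh: "0 < s" "s < h" using t by auto
    have "((\<lambda>s. x1 s - x2 s) has_vector_derivative G s (x1 s) - G s (x2 s)) (at s)"
      using vd_interior[OF d1[rule_format] sh] vd_interior[OF d2[rule_format] sh] sh
      by (intro has_vector_derivative_diff) auto
    from sq_norm_deriv[OF this]
    show "(u has_real_derivative 2 * ((x1 s - x2 s) \<bullet> (G s (x1 s) - G s (x2 s)))) (at s)"
      unfolding u_def .
    have "(x1 s - x2 s) \<bullet> (G s (x1 s) - G s (x2 s)) \<le> norm (x1 s - x2 s) * norm (G s (x1 s) - G s (x2 s))"
      by (rule norm_cauchy_schwarz)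
    also have "\<dots> \<le> norm (x1 s - x2 s) * (\<bar>L\<bar> * norm (x1 s - x2 s))"
    proof (intro mult_left_mono)
      have "norm (G s (x1 s) - G s (x2 s)) \<le> L * norm (x1 s - x2 s)"
      proof -
        have "x1 s \<in> cball 0 (max R1 R2)" "x2 s \<in> cball 0 (max R1 R2)"
          using R1[rule_format, of s] R2[rule_format, of s] sh by auto
        then show ?thesis using L sh by auto
      qed
      also have "\<dots> \<le> \<bar>L\<bar> * norm (x1 s - x2 s)" by (intro mult_right_mono) auto
      finally show "norm (G s (x1 s) - G s (x2 s)) \<le> \<bar>L\<bar> * norm (x1 s - x2 s)" .
    qed auto
    finally show "2 * ((x1 s - x2 s) \<bullet> (G s (x1 s) - G s (x2 s))) \<le> 2 * \<bar>L\<bar> * u s + 0"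
      by (simp add: u_def power2_eq_square algebra_simps)
  qed (use t in auto)
  then have "u t \<le> 0" using i by (simp add: u_def)
  then show ?thesis by (simp add: u_def)
qed

definition picard :: "(real \<Rightarrow> 'a::euclidean_space \<Rightarrow> 'a) \<Rightarrow> 'a \<Rightarrow> nat \<Rightarrow> real \<Rightarrow> 'a" where
  "picard G y0 k = ((\<lambda>p t. y0 + integral {0..t} (\<lambda>s. G s (p s))) ^^ k) (\<lambda>t. y0)"

lemma picard_0[simp]: "picard G y0 0 = (\<lambda>t. y0)"
  by (simp add: picard_def)

lemma picard_Suc: "picard G y0 (Suc k) t = y0 + integral {0..t} (\<lambda>s. G s (picard G y0 k s))"
  by (simp add: picard_def)

lemma integral_cont_vd:
  fixes g :: "real \<Rightarrow> 'a::euclidean_space"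
  assumes "continuous_on {0..h} g" "t \<in> {0..h}"
  shows "((\<lambda>t. y0 + integral {0..t} g) has_vector_derivative g t) (at t within {0..h})"
  using integral_has_vector_derivative[OF assms] by (auto intro!: derivative_eq_intros)

lemma ode_exists:
  fixes G :: "real \<Rightarrow> 'a::euclidean_space \<Rightarrow> 'a" and y0 :: 'a
  assumes h: "h > 0" and R: "R \<ge> 0" and L0: "L \<ge> 0"
    and cG: "\<And>p. continuous_on {0..h} p \<Longrightarrow> (\<forall>s\<in>{0..h}. p s \<in> cball y0 R) \<Longrightarrow> continuous_on {0..h} (\<lambda>s. G s (p s))"
    and bG: "\<And>t x. t \<in> {0..h} \<Longrightarrow> x \<in> cball y0 R \<Longrightarrow> norm (G t x) \<le> B"
    and lG: "\<And>t x y. t \<in> {0..h} \<Longrightarrow> x \<in> cball y0 R \<Longrightarrow> y \<in> cball y0 R \<Longrightarrow> norm (G t x - G t y) \<le> L * norm (x - y)"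
    and hB: "h * B \<le> R" and hL: "h * L \<le> 1/2"
  shows "\<exists>x. x 0 = y0 \<and> (\<forall>t\<in>{0..h}. (x has_vector_derivative G t (x t)) (at t within {0..h}))
           \<and> (\<forall>t\<in>{0..h}. x t \<in> cball y0 R)"
proof -
  define P where "P = picard G y0"
  have B0: "B \<ge> 0" using bG[of 0 y0] h R by (auto intro: order_trans[OF norm_ge_zero])
  have inv: "continuous_on {0..h} (P k) \<and> (\<forall>t\<in>{0..h}. P k t \<in> cball y0 R)" for k
  proof (induction k)
    case 0 then show ?case using R by (simp add: P_def)
  next
    case (Suc k)
    have cg: "continuous_on {0..h} (\<lambda>s. G s (P k s))" using cG Suc by blast
    have "continuous_on {0..h} (P (Suc k))"
    proof -
      have "continuous_on {0..h} (\<lambda>t. y0 + integral {0..t} (\<lambda>s. G s (P k s)))"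
        using integral_cont_vd[OF cg] continuous_on_eq_continuous_within has_vector_derivative_continuous
        by blast
      then show ?thesis by (simp add: P_def picard_Suc[abs_def])
    qed
    moreover have "P (Suc k) t \<in> cball y0 R" if t: "t \<in> {0..h}" for t
    proof -
      have "norm (integral {0..t} (\<lambda>s. G s (P k s))) \<le> B * (t - 0)"
        using t by (intro integral_bound continuous_on_subset[OF cg] bG) (use Suc in auto)
      also have "\<dots> \<le> B * h" using t B0 by (intro mult_left_mono) auto
      finally show ?thesis using hB by (simp add: P_def picard_Suc dist_norm mult.commute)
    qed
    ultimately show ?case by blast
  qed
  have cg: "continuous_on {0..h} (\<lambda>s. G s (P k s))" for k using cG inv by blast
  have intg: "(\<lambda>s. G s (P k s)) integrable_on {0..t}" if "t \<in> {0..h}" for k t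
    using that by (intro integrable_continuous_interval continuous_on_subset[OF cg]) auto
  have diff: "norm (P (Suc k) t - P k t) \<le> R * (1/2)^k" if "t \<in> {0..h}" for k t
    using that
  proof (induction k arbitrary: t)
    case 0
    have "norm (integral {0..t} (\<lambda>s. G s (P 0 s))) \<le> B * (t - 0)"
      using 0 by (intro integral_bound continuous_on_subset[OF cg] bG) (use inv in auto)
    also have "\<dots> \<le> B * h" using 0 B0 by (intro mult_left_mono) auto
    finally show ?case using hB by (simp add: P_def picard_Suc mult.commute)
  next
    case (Suc k)
    have "P (Suc (Suc k)) t - P (Suc k) t = integral {0..t} (\<lambda>s. G s (P (Suc k) s) - G s (P k s))"
    proof -
      have PS: "P (Suc m) t = y0 + integral {0..t} (\<lambda>s. G s (P m s))" for m
        unfolding P_def by (rule picard_Suc)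
      show ?thesis unfolding PS[of "Suc k"] PS[of k]
        using integral_diff[OF intg[OF Suc.prems, of "Suc k"] intg[OF Suc.prems, of k]] by simp
    qed
    also have "norm \<dots> \<le> (L * (R * (1/2)^k)) * (t - 0)"
    proof (intro integral_bound)
      show "continuous_on {0..t} (\<lambda>s. G s (P (Suc k) s) - G s (P k s))"
        using Suc.prems by (intro continuous_intros continuous_on_subset[OF cg]) auto
      fix s assume s: "s \<in> {0..t}"
      then have sh: "s \<in> {0..h}" using Suc.prems by auto
      have "norm (G s (P (Suc k) s) - G s (P k s)) \<le> L * norm (P (Suc k) s - P k s)"
        using inv sh by (intro lG) auto
      also have "\<dots> \<le> L * (R * (1/2)^k)" using Suc.IH[OF sh] L0 by (intro mult_left_mono) auto
      finally show "norm (G s (P (Suc k) s) - G s (P k s)) \<le> L * (R * (1/2)^k)" .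
    qed (use Suc.prems in auto)
    also have "\<dots> \<le> (L * (R * (1/2)^k)) * h" using Suc.prems L0 R by (intro mult_left_mono) auto
    also have "\<dots> = (h * L) * (R * (1/2)^k)" by simp
    also have "\<dots> \<le> (1/2) * (R * (1/2)^k)" using hL R by (intro mult_right_mono) auto
    finally show ?case by simp
  qed
  define d where "d i t = P (Suc i) t - P i t" for i t
  define x where "x t = y0 + suminf (\<lambda>i. d i t)" for t
  have Psum: "P n t = y0 + (\<Sum>i<n. d i t)" for n t
    unfolding d_def using sum_lessThan_telescope[of "\<lambda>i. P i t" n] by (simp add: P_def)
  have ul0: "uniform_limit {0..h} (\<lambda>n t. \<Sum>i<n. d i t) (\<lambda>t. suminf (\<lambda>i. d i t)) sequentially"
    by (rule Weierstrass_m_test[of _ _ "\<lambda>i. R * (1/2)^i"]) (auto simp: d_def diff intro!: summable_mult summable_geometric)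
  have ul: "uniform_limit {0..h} P x sequentially"
    using ul0 unfolding uniform_limit_iff x_def Psum by (simp add: dist_norm)
  have cx: "continuous_on {0..h} x"
    by (rule uniform_limit_theorem[OF _ ul]) (use inv in auto)
  have Plim: "(\<lambda>n. P n t) \<longlonglongrightarrow> x t" if "t \<in> {0..h}" for t
    using tendsto_uniform_limitI[OF ul that] .
  have xin: "x t \<in> cball y0 R" if "t \<in> {0..h}" for t
    by (rule Lim_in_closed_set[OF closed_cball _ _ Plim[OF that]]) (use inv that in auto)
  have cgx: "continuous_on {0..h} (\<lambda>s. G s (x s))" using cG cx xin by blast
  have inteq: "x t = y0 + integral {0..t} (\<lambda>s. G s (x s))" if t: "t \<in> {0..h}" for t
  proof -
    have ulg: "uniform_limit {0..t} (\<lambda>n s. G s (P n s)) (\<lambda>s. G s (x s)) sequentially"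
    proof (rule uniform_limitI)
      fix e :: real assume e: "e > 0"
      have "\<forall>\<^sub>F n in sequentially. \<forall>s\<in>{0..h}. dist (P n s) (x s) < e / (L + 1)"
        using uniform_limitD[OF ul] e L0 by simp
      then show "\<forall>\<^sub>F n in sequentially. \<forall>s\<in>{0..t}. dist (G s (P n s)) (G s (x s)) < e"
      proof (rule eventually_mono, intro ballI)
        fix n s assume H: "\<forall>s\<in>{0..h}. dist (P n s) (x s) < e / (L + 1)" and s: "s \<in> {0..t}"
        then have sh: "s \<in> {0..h}" using t by auto
        have "dist (G s (P n s)) (G s (x s)) \<le> L * dist (P n s) (x s)"
          unfolding dist_norm using inv xin sh by (intro lG) auto
        also have "\<dots> \<le> L * (e / (L + 1))" using H[rule_format, OF sh] L0 by (intro mult_left_mono) auto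
        also have "\<dots> < e" using e L0 by (simp add: field_simps)
        finally show "dist (G s (P n s)) (G s (x s)) < e" .
      qed
    qed
    obtain I J where I: "\<And>n. ((\<lambda>s. G s (P n s)) has_integral I n) {0..t}"
      and J: "((\<lambda>s. G s (x s)) has_integral J) {0..t}" and IJ: "I \<longlonglongrightarrow> J"
    proof -
      have "continuous_on {0..t} (\<lambda>s. G s (P n s))" for n
        using t by (intro continuous_on_subset[OF cg]) auto
      then show ?thesis using uniform_limit_integral[OF ulg] that by auto
    qed
    have "(\<lambda>n. P (Suc n) t) \<longlonglongrightarrow> y0 + J"
      using IJ by (simp add: P_def picard_Suc integral_unique[OF I[unfolded P_def]] tendsto_add)
    moreover have "(\<lambda>n. P (Suc n) t) \<longlonglongrightarrow> x t" using Plim[OF t] by (rule LIMSEQ_Suc)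
    ultimately have "x t = y0 + J" using LIMSEQ_unique by blast
    then show ?thesis using integral_unique[OF J] by simp
  qed
  show ?thesis
  proof (intro exI conjI ballI)
    show "x 0 = y0" using inteq[of 0] h by simp
    fix t assume t: "t \<in> {0..h}"
    show "(x has_vector_derivative G t (x t)) (at t within {0..h})"
      by (rule has_vector_derivative_transform[OF t inteq integral_cont_vd[OF cgx t]])
    show "x t \<in> cball y0 R" using xin t .
  qed
qed

lemma vmvt:
  fixes \<phi> :: "real \<Rightarrow> 'a::real_normed_vector"
  assumes "\<And>t. t \<in> {0..T} \<Longrightarrow> (\<phi> has_vector_derivative \<phi>' t) (at t within {0..T})"
    and "\<And>t. t \<in> {0..T} \<Longrightarrow> norm (\<phi>' t) \<le> K" and "T \<ge> 0"
  shows "norm (\<phi> T - \<phi> 0) \<le> K * T"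
proof -
  have "norm (\<phi> T - \<phi> 0) \<le> K * norm (T - 0)"
  proof (rule differentiable_bound[OF convex_real_interval(5)])
    show "(\<phi> has_derivative (\<lambda>s. s *\<^sub>R \<phi>' t)) (at t within {0..T})" if "t \<in> {0..T}" for t
      using assms(1)[OF that] unfolding has_vector_derivative_def .
    show "onorm (\<lambda>s. s *\<^sub>R \<phi>' t) \<le> K" if "t \<in> {0..T}" for t
    proof (rule onorm_le)
      fix s :: real
      have "norm (s *\<^sub>R \<phi>' t) = \<bar>s\<bar> * norm (\<phi>' t)" by simp
      also have "\<dots> \<le> \<bar>s\<bar> * K" using assms(2)[OF that] by (rule mult_left_mono) simp
      finally show "norm (s *\<^sub>R \<phi>' t) \<le> K * norm s" by (simp add: mult.commute)
    qed
  qed (use assms(3) in auto)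
  then show ?thesis using assms(3) by simp
qed

locale odesys =
  fixes F :: "'a::euclidean_space \<Rightarrow> 'a" and A :: "'a \<Rightarrow> 'a \<Rightarrow> 'a" and \<Omega> :: "'a \<Rightarrow> 'a"
  assumes Fder: "\<And>y. (F has_derivative A y) (at y)"
    and Acont: "\<And>b. b \<in> Basis \<Longrightarrow> continuous_on UNIV (\<lambda>y. A y b)"
    and Alip: "\<And>R. \<exists>L\<ge>0. \<forall>y\<in>cball 0 R. \<forall>z\<in>cball 0 R. \<forall>v. norm (A y v - A z v) \<le> L * norm (y - z) * norm v"
    and \<Omega>lin: "linear \<Omega>"
    and \<Omega>compat: "\<And>y a b. A y a \<bullet> \<Omega> b + a \<bullet> \<Omega> (A y b) = 0"
begin

lemma Ablin: "bounded_linear (A y)"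
  using Fder has_derivative_bounded_linear by blast

lemma Alin: "linear (A y)"
  using Ablin bounded_linear.linear by blast

lemma A_repr: "A y v = (\<Sum>b\<in>Basis. (v \<bullet> b) *\<^sub>R A y b)"
proof -
  have "A y v = A y (\<Sum>b\<in>Basis. (v \<bullet> b) *\<^sub>R b)" by (simp add: euclidean_representation)
  also have "\<dots> = (\<Sum>b\<in>Basis. (v \<bullet> b) *\<^sub>R A y b)"
    by (simp add: linear_sum[OF Alin] linear_cmul[OF Alin])
  finally show ?thesis .
qed

lemma A_comp_cont:
  assumes "continuous_on S g" "continuous_on S p"
  shows "continuous_on S (\<lambda>s. A (g s) (p s))"
proof -
  have "continuous_on S (\<lambda>s. \<Sum>b\<in>Basis. (p s \<bullet> b) *\<^sub>R A (g s) b)"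
    by (intro continuous_intros assms continuous_on_compose2[OF Acont]) auto
  then show ?thesis by (subst A_repr) simp
qed

lemma Fcont: "continuous_on S F"
  using Fder by (intro continuous_at_imp_continuous_on ballI) (rule has_derivative_continuous)

lemma Abound: "\<exists>B\<ge>0. \<forall>y\<in>cball 0 R. \<forall>v. norm (A y v) \<le> B * norm v"
proof -
  obtain K where K: "\<And>v. norm (A 0 v) \<le> norm v * K" "K > 0"
    using bounded_linear.pos_bounded[OF Ablin[of 0]] by blast
  obtain L where L: "L \<ge> 0" "\<forall>y\<in>cball 0 \<bar>R\<bar>. \<forall>z\<in>cball 0 \<bar>R\<bar>. \<forall>v. norm (A y v - A z v) \<le> L * norm (y - z) * norm v"
    using Alip by blast
  show ?thesis
  proof (intro exI[of _ "K + L * \<bar>R\<bar>"] conjI ballI allI)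
    show "0 \<le> K + L * \<bar>R\<bar>" using K L by simp
    fix y v assume y: "y \<in> cball (0::'a) R"
    then have y': "y \<in> cball 0 \<bar>R\<bar>" by auto
    have "norm (A y v) \<le> norm (A 0 v) + norm (A y v - A 0 v)" by (rule norm_triangle_sub)
    also have "\<dots> \<le> norm v * K + L * norm (y - 0) * norm v"
    proof (intro add_mono)
      have z0: "(0::'a) \<in> cball 0 \<bar>R\<bar>" by simp
      show "norm (A y v - A 0 v) \<le> L * norm (y - 0) * norm v" using L(2)[rule_format, OF y' z0, of v] by simp
    qed (use K(1) in auto)
    also have "\<dots> \<le> norm v * K + L * \<bar>R\<bar> * norm v"
      using y L by (intro add_mono mult_right_mono mult_left_mono) auto
    finally show "norm (A y v) \<le> (K + L * \<bar>R\<bar>) * norm v" by (simp add: algebra_simps)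
  qed
qed

lemma Flip: "\<exists>B\<ge>0. \<forall>y\<in>cball 0 R. \<forall>z\<in>cball 0 R. norm (F y - F z) \<le> B * norm (y - z)"
proof -
  obtain B where B: "B \<ge> 0" "\<forall>y\<in>cball 0 R. \<forall>v. norm (A y v) \<le> B * norm v" using Abound by blast
  show ?thesis
  proof (intro exI[of _ B] conjI ballI)
    fix y z assume "y \<in> cball (0::'a) R" "z \<in> cball (0::'a) R"
    then show "norm (F y - F z) \<le> B * norm (y - z)"
    proof (intro differentiable_bound[OF convex_cball])
      show "(F has_derivative A x) (at x within cball 0 R)" for x using Fder has_derivative_at_withinI by blast
      show "onorm (A x) \<le> B" if "x \<in> cball 0 R" for x
        using B that by (intro onorm_le) (simp add: mult.commute)
    qed auto
  qed (use B in auto)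
qed

lemma Fbound: "\<exists>B\<ge>0. \<forall>y\<in>cball 0 R. norm (F y) \<le> B"
proof -
  have "bounded (F ` cball 0 R)" by (intro compact_imp_bounded compact_continuous_image Fcont compact_cball)
  then obtain B where "\<forall>x\<in>F ` cball 0 R. norm x \<le> B" unfolding bounded_iff by blast
  then have "\<forall>y\<in>cball 0 R. norm (F y) \<le> max B 0"
    by (metis image_eqI max.coboundedI1)
  then show ?thesis by (intro exI[of _ "max B 0"]) simp
qed

lemma Ftaylor: "\<exists>L\<ge>0. \<forall>y\<in>cball 0 R. \<forall>z\<in>cball 0 R. norm (F z - F y - A y (z - y)) \<le> L * (norm (z - y))^2"
proof -
  obtain L where L: "L \<ge> 0" "\<forall>y\<in>cball 0 R. \<forall>z\<in>cball 0 R. \<forall>v. norm (A y v - A z v) \<le> L * norm (y - z) * norm v"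
    using Alip by blast
  show ?thesis
  proof (intro exI[of _ L] conjI ballI)
    fix y z assume y: "y \<in> cball (0::'a) R" and z: "z \<in> cball (0::'a) R"
    have seg: "closed_segment y z \<subseteq> cball 0 R"
      using y z convex_cball closed_segment_subset by blast
    have "norm (F z - F y - A y (z - y)) \<le> norm (z - y) * (L * norm (z - y))"
    proof (rule differentiable_bound_linearization[of y z "closed_segment y z" F A y])
      show "y + t *\<^sub>R (z - y) \<in> closed_segment y z" if "t \<in> {0..1}" for t
        using that by (auto simp: closed_segment_def algebra_simps intro!: exI[of _ t])
      show "(F has_derivative A x) (at x within closed_segment y z)" if "x \<in> closed_segment y z" for x
        using Fder has_derivative_at_withinI by blast
      show "onorm (A x - A y) \<le> L * norm (z - y)" if x: "x \<in> closed_segment y z" for x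
      proof (rule onorm_le)
        fix v
        have "norm ((A x - A y) v) \<le> L * norm (x - y) * norm v"
        proof -
          have xc: "x \<in> cball 0 R" using seg x by blast
          show ?thesis using L(2)[rule_format, OF xc y, of v] by simp
        qed
        also have "\<dots> \<le> L * norm (z - y) * norm v"
        proof -
          have "norm (x - y) \<le> norm (z - y)"
            using dist_in_closed_segment[OF x] by (simp add: dist_norm norm_minus_commute)
          then show ?thesis using L by (intro mult_right_mono mult_left_mono) auto
        qed
        finally show "norm ((A x - A y) v) \<le> L * norm (z - y) * norm v" .
      qed
    qed auto
    then show "norm (F z - F y - A y (z - y)) \<le> L * (norm (z - y))^2"
      by (simp add: power2_eq_square algebra_simps)
  qed (use L in auto)
qed

definition sol :: "'a \<Rightarrow> real \<Rightarrow> (real \<Rightarrow> 'a) \<Rightarrow> bool" where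
  "sol y h x \<longleftrightarrow> x 0 = y \<and> (\<forall>t\<in>{0..h}. (x has_vector_derivative F (x t)) (at t within {0..h}))"

definition flowF :: "real \<Rightarrow> 'a \<Rightarrow> 'a" where
  "flowF h y = (THE w. \<exists>x. sol y h x \<and> x h = w)"

lemma sol_unique:
  assumes "sol y h x1" "sol y h x2" "t \<in> {0..h}"
  shows "x1 t = x2 t"
proof (rule ode_unique[of h "\<lambda>t. F"])
  show "\<exists>L. \<forall>t\<in>{0..h}. \<forall>x\<in>cball 0 R. \<forall>y\<in>cball 0 R. norm (F x - F y) \<le> L * norm (x - y)" for R
    using Flip by blast
qed (use assms in \<open>auto simp: sol_def\<close>)

lemma flowF_eq:
  assumes "sol y h x" "h \<ge> 0"
  shows "flowF h y = x h"
  unfolding flowF_def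
proof (rule the_equality)
  show "\<exists>x'. sol y h x' \<and> x' h = x h" using assms by blast
  fix w assume "\<exists>x'. sol y h x' \<and> x' h = w"
  then obtain x' where "sol y h x'" "x' h = w" by blast
  then show "w = x h" using sol_unique[OF _ assms(1), of x' h] assms(2) by auto
qed

end

context odesys begin

lemma lin_ode:
  assumes h: "h > 0" and cg: "continuous_on {0..h} \<gamma>" and BA0: "BA \<ge> 0"
    and bA: "\<And>t v. t \<in> {0..h} \<Longrightarrow> norm (A (\<gamma> t) v) \<le> BA * norm v" and hBA: "h * BA \<le> 1/2"
  shows "\<exists>m. m 0 = v \<and> (\<forall>t\<in>{0..h}. (m has_vector_derivative A (\<gamma> t) (m t)) (at t within {0..h}))
            \<and> (\<forall>t\<in>{0..h}. m t \<in> cball v (norm v))"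
proof (rule ode_exists[where G="\<lambda>t m. A (\<gamma> t) m" and R="norm v" and B="BA * (2 * norm v)" and L=BA])
  show "continuous_on {0..h} (\<lambda>s. A (\<gamma> s) (p s))" if "continuous_on {0..h} p" for p
    by (rule A_comp_cont[OF cg that])
  show "norm (A (\<gamma> t) x) \<le> BA * (2 * norm v)" if "t \<in> {0..h}" "x \<in> cball v (norm v)" for t x
  proof -
    have "norm x \<le> 2 * norm v" using that(2) norm_triangle_sub[of x v]
      by (simp add: dist_norm norm_minus_commute)
    then show ?thesis using bA[OF that(1), of x] BA0 by (meson mult_left_mono order_trans)
  qed
  show "norm (A (\<gamma> t) x - A (\<gamma> t) y) \<le> BA * norm (x - y)" if "t \<in> {0..h}" for t x y
    using bA[OF that, of "x - y"] by (simp add: linear_diff[OF Alin])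
  show "h * (BA * (2 * norm v)) \<le> norm v"
  proof -
    have "h * (BA * (2 * norm v)) = (h * BA) * (2 * norm v)" by simp
    also have "\<dots> \<le> (1/2) * (2 * norm v)" using hBA by (intro mult_right_mono) auto
    finally show ?thesis by simp
  qed
qed (use h BA0 hBA in auto)

lemma lin_unique:
  assumes bA: "\<And>t v. t \<in> {0..h} \<Longrightarrow> norm (A (\<gamma> t) v) \<le> BA * norm v"
    and d1: "\<forall>t\<in>{0..h}. (m1 has_vector_derivative A (\<gamma> t) (m1 t)) (at t within {0..h})"
    and d2: "\<forall>t\<in>{0..h}. (m2 has_vector_derivative A (\<gamma> t) (m2 t)) (at t within {0..h})"
    and i: "m1 0 = m2 0" and t: "t \<in> {0..h}"
  shows "m1 t = m2 t"
proof (rule ode_unique[OF _ d1 d2 i t])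
  show "\<exists>L. \<forall>t\<in>{0..h}. \<forall>x\<in>cball 0 R. \<forall>y\<in>cball 0 R. norm (A (\<gamma> t) x - A (\<gamma> t) y) \<le> L * norm (x - y)" for R
    using bA by (intro exI[of _ BA]) (simp add: linear_diff[OF Alin, symmetric])
qed

lemma lin_linear:
  assumes bA: "\<And>t v. t \<in> {0..h} \<Longrightarrow> norm (A (\<gamma> t) v) \<le> BA * norm v"
    and m0: "\<And>v. m v 0 = v"
    and md: "\<And>v. \<forall>t\<in>{0..h}. (m v has_vector_derivative A (\<gamma> t) (m v t)) (at t within {0..h})"
    and t: "t \<in> {0..h}"
  shows "linear (\<lambda>v. m v t)"
proof (rule linearI)
  fix v w
  show "m (v + w) t = m v t + m w t"
  proof (rule lin_unique[OF bA md[of "v + w"] _ _ t])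
    show "\<forall>s\<in>{0..h}. ((\<lambda>t. m v t + m w t) has_vector_derivative A (\<gamma> s) (m v s + m w s)) (at s within {0..h})"
      using md[of v] md[of w] by (auto intro!: has_vector_derivative_add simp: linear_add[OF Alin])
    show "m (v + w) 0 = m v 0 + m w 0" using m0[of "v+w"] m0[of v] m0[of w] by simp
  qed
next
  fix c v
  show "m (c *\<^sub>R v) t = c *\<^sub>R m v t"
  proof (rule lin_unique[OF bA md[of "c *\<^sub>R v"] _ _ t])
    show "\<forall>s\<in>{0..h}. ((\<lambda>t. c *\<^sub>R m v t) has_vector_derivative A (\<gamma> s) (c *\<^sub>R m v s)) (at s within {0..h})"
      using md[of v] by (auto intro!: bounded_linear.has_vector_derivative[OF bounded_linear_scaleR_right] simp: linear_cmul[OF Alin])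
    show "m (c *\<^sub>R v) 0 = c *\<^sub>R m v 0" using m0[of "c *\<^sub>R v"] m0[of v] by simp
  qed
qed

lemma inner_Omega_deriv:
  assumes "(f1 has_vector_derivative d1) (at t)" "(f2 has_vector_derivative d2) (at t)"
  shows "((\<lambda>t. f1 t \<bullet> \<Omega> (f2 t)) has_real_derivative (d1 \<bullet> \<Omega> (f2 t) + f1 t \<bullet> \<Omega> d2)) (at t)"
proof -
  have bl: "bounded_linear \<Omega>" using \<Omega>lin linear_conv_bounded_linear by blast
  have d2': "((\<lambda>t. \<Omega> (f2 t)) has_vector_derivative \<Omega> d2) (at t)"
    using bounded_linear.has_vector_derivative[OF bl assms(2)] .
  have "((\<lambda>t. f1 t \<bullet> \<Omega> (f2 t)) has_derivative (\<lambda>s. f1 t \<bullet> (s *\<^sub>R \<Omega> d2) + (s *\<^sub>R d1) \<bullet> \<Omega> (f2 t))) (at t)"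
    using assms(1) d2' unfolding has_vector_derivative_def by (intro derivative_intros) auto
  then have "((\<lambda>t. f1 t \<bullet> \<Omega> (f2 t)) has_derivative (*) (d1 \<bullet> \<Omega> (f2 t) + f1 t \<bullet> \<Omega> d2)) (at t)"
    by (rule has_derivative_eq_rhs) (simp add: fun_eq_iff algebra_simps)
  then show ?thesis by (simp add: has_field_derivative_def)
qed

lemma sympl:
  assumes h: "h > 0"
    and md: "\<And>v. \<forall>t\<in>{0..h}. (m v has_vector_derivative A (\<gamma> t) (m v t)) (at t within {0..h})"
  shows "m w h \<bullet> \<Omega> (m v h) = m w 0 \<bullet> \<Omega> (m v 0)"
proof (rule DERIV_isconst_end[OF h])
  have bl: "bounded_linear \<Omega>" using \<Omega>lin linear_conv_bounded_linear by blast
  show "continuous_on {0..h} (\<lambda>t. m w t \<bullet> \<Omega> (m v t))"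
    by (intro continuous_intros vd_continuous_on[OF md] continuous_on_compose2[OF linear_continuous_on[OF bl]]) auto
  fix t assume t: "0 < t" "t < h"
  have "((\<lambda>t. m w t \<bullet> \<Omega> (m v t)) has_real_derivative
      (A (\<gamma> t) (m w t) \<bullet> \<Omega> (m v t) + m w t \<bullet> \<Omega> (A (\<gamma> t) (m v t)))) (at t)"
    by (intro inner_Omega_deriv vd_interior[OF _ t]) (use md t in auto)
  then show "((\<lambda>t. m w t \<bullet> \<Omega> (m v t)) has_real_derivative 0) (at t)"
    by (simp add: \<Omega>compat)
qed

end

context odesys begin

lemma flow_deriv_core:
  assumes h: "0 < h" "h \<le> 1" and hLF: "h * LF \<le> 1/2" and BA0: "BA \<ge> 0" and LF0: "LF \<ge> 0"
    and xz: "sol z h xz" and xy: "sol y h xy"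
    and xzK: "\<forall>t\<in>{0..h}. xz t \<in> K" and xyK: "\<forall>t\<in>{0..h}. xy t \<in> K"
    and LF: "\<forall>a\<in>K. \<forall>b\<in>K. norm (F a - F b) \<le> LF * norm (a - b)"
    and BA: "\<forall>a\<in>K. \<forall>v. norm (A a v) \<le> BA * norm v"
    and Tc: "\<forall>a\<in>K. \<forall>b\<in>K. norm (F b - F a - A a (b - a)) \<le> Tc * (norm (b - a))^2"
    and Tc0: "Tc \<ge> 0" and m0: "m 0 = z - y"
    and md: "\<forall>t\<in>{0..h}. (m has_vector_derivative A (xy t) (m t)) (at t within {0..h})"
  shows "(norm (xz h - xy h - m h))^2 \<le> exp (2 * BA + 1) * (9 * Tc^2 * (norm (z - y))^4)"
proof -
  have dz: "\<forall>t\<in>{0..h}. (xz has_vector_derivative F (xz t)) (at t within {0..h})" and z0: "xz 0 = z"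
    using xz by (auto simp: sol_def)
  have dy: "\<forall>t\<in>{0..h}. (xy has_vector_derivative F (xy t)) (at t within {0..h})" and y0: "xy 0 = y"
    using xy by (auto simp: sol_def)
  have cz: "continuous_on {0..h} xz" and cy: "continuous_on {0..h} xy" and cm: "continuous_on {0..h} m"
    using vd_continuous_on[OF dz] vd_continuous_on[OF dy] vd_continuous_on[OF md] by auto
  define n where "n = norm (z - y)"
  have step1: "(norm (xz t - xy t))^2 \<le> 3 * n^2" if t: "t \<in> {0..h}" for t
  proof -
    have "(norm (xz t - xy t))^2 \<le> exp (2 * LF * t) * ((norm (xz 0 - xy 0))^2 + 0 * t)"
    proof (rule gronwall[where u="\<lambda>s. (norm (xz s - xy s))^2"])
      show "continuous_on {0..t} (\<lambda>s. (norm (xz s - xy s))^2)"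
        using t by (intro continuous_intros continuous_on_subset[OF cz] continuous_on_subset[OF cy]) auto
      fix s assume s: "0 < s" "s < t"
      then have sh: "0 < s" "s < h" using t by auto
      have "((\<lambda>s. xz s - xy s) has_vector_derivative F (xz s) - F (xy s)) (at s)"
        using vd_interior[OF dz[rule_format] sh] vd_interior[OF dy[rule_format] sh] sh
        by (intro has_vector_derivative_diff) auto
      from sq_norm_deriv[OF this]
      show "((\<lambda>s. (norm (xz s - xy s))^2) has_real_derivative 2 * ((xz s - xy s) \<bullet> (F (xz s) - F (xy s)))) (at s)" .
      have inK: "xz s \<in> K" "xy s \<in> K" using xzK xyK sh by auto
      have "(xz s - xy s) \<bullet> (F (xz s) - F (xy s)) \<le> norm (xz s - xy s) * norm (F (xz s) - F (xy s))"
        by (rule norm_cauchy_schwarz)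
      also have "\<dots> \<le> norm (xz s - xy s) * (LF * norm (xz s - xy s))"
        using LF inK by (intro mult_left_mono) auto
      finally show "2 * ((xz s - xy s) \<bullet> (F (xz s) - F (xy s))) \<le> 2 * LF * (norm (xz s - xy s))^2 + 0"
        by (simp add: power2_eq_square algebra_simps)
    qed (use t LF0 in auto)
    also have "\<dots> \<le> exp 1 * n^2"
    proof -
      have "2 * LF * t \<le> 1" using t hLF LF0 mult_left_mono[of t h "2 * LF"] by (auto simp: algebra_simps)
      then have "exp (2 * LF * t) \<le> exp 1" by simp
      then show ?thesis using z0 y0 by (simp add: n_def mult_right_mono)
    qed
    also have "\<dots> \<le> 3 * n^2" using exp_le by (intro mult_right_mono) auto
    finally show ?thesis .
  qed
  define e where "e s = xz s - xy s - m s" for s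
  define b where "b = 9 * Tc^2 * n^4"
  have "(norm (e h))^2 \<le> exp ((2 * BA + 1) * h) * ((norm (e 0))^2 + b * h)"
  proof (rule gronwall[where u="\<lambda>s. (norm (e s))^2"])
    show "continuous_on {0..h} (\<lambda>s. (norm (e s))^2)"
      unfolding e_def by (intro continuous_intros cz cy cm)
    fix s assume sh: "0 < s" "s < h"
    have "(e has_vector_derivative F (xz s) - F (xy s) - A (xy s) (m s)) (at s)"
      unfolding e_def
      using vd_interior[OF dz[rule_format] sh] vd_interior[OF dy[rule_format] sh] vd_interior[OF md[rule_format] sh] sh
      by (intro has_vector_derivative_diff) auto
    from sq_norm_deriv[OF this]
    show "((\<lambda>s. (norm (e s))^2) has_real_derivative 2 * (e s \<bullet> (F (xz s) - F (xy s) - A (xy s) (m s)))) (at s)" .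
    have inK: "xz s \<in> K" "xy s \<in> K" using xzK xyK sh by auto
    define \<rho> where "\<rho> = F (xz s) - F (xy s) - A (xy s) (xz s - xy s)"
    have split: "F (xz s) - F (xy s) - A (xy s) (m s) = A (xy s) (e s) + \<rho>"
    proof -
      have "A (xy s) (e s) = A (xy s) (xz s - xy s) - A (xy s) (m s)"
        unfolding e_def by (rule linear_diff[OF Alin])
      then show ?thesis unfolding \<rho>_def by (simp add: algebra_simps)
    qed
    have \<rho>b: "norm \<rho> \<le> Tc * (3 * n^2)"
    proof -
      have "norm \<rho> \<le> Tc * (norm (xz s - xy s))^2" unfolding \<rho>_def using Tc inK by auto
      also have "\<dots> \<le> Tc * (3 * n^2)"
      proof (rule mult_left_mono)
        show "(norm (xz s - xy s))^2 \<le> 3 * n^2" using step1 sh by auto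
      qed (rule Tc0)
      finally show ?thesis .
    qed
    have "e s \<bullet> (A (xy s) (e s) + \<rho>) \<le> norm (e s) * norm (A (xy s) (e s) + \<rho>)"
      by (rule norm_cauchy_schwarz)
    also have "\<dots> \<le> norm (e s) * (BA * norm (e s) + norm \<rho>)"
    proof (rule mult_left_mono)
      have "norm (A (xy s) (e s)) \<le> BA * norm (e s)" using BA inK by auto
      then show "norm (A (xy s) (e s) + \<rho>) \<le> BA * norm (e s) + norm \<rho>"
        using norm_triangle_ineq[of "A (xy s) (e s)" \<rho>] by linarith
    qed simp
    finally have i1: "e s \<bullet> (A (xy s) (e s) + \<rho>) \<le> BA * (norm (e s))^2 + norm (e s) * norm \<rho>"
      by (simp add: power2_eq_square algebra_simps)
    have i2: "2 * (norm (e s) * norm \<rho>) \<le> (norm (e s))^2 + (norm \<rho>)^2"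
      using sum_squares_bound[of "norm (e s)" "norm \<rho>"] by (simp add: power2_eq_square algebra_simps)
    have i3: "(norm \<rho>)^2 \<le> b"
    proof -
      have "(norm \<rho>)^2 \<le> (Tc * (3 * n^2))^2" using \<rho>b by (intro power_mono) auto
      then show ?thesis by (simp add: b_def power2_eq_square power4_eq_xxxx algebra_simps)
    qed
    show "2 * (e s \<bullet> (F (xz s) - F (xy s) - A (xy s) (m s))) \<le> (2 * BA + 1) * (norm (e s))^2 + b"
      unfolding split using i1 i2 i3 by (simp add: algebra_simps)
  qed (use h BA0 in \<open>auto simp: b_def\<close>)
  also have "\<dots> \<le> exp (2 * BA + 1) * b"
  proof -
    have e0: "e 0 = 0" using z0 y0 m0 by (simp add: e_def)
    have "exp ((2 * BA + 1) * h) \<le> exp (2 * BA + 1)" using h BA0 mult_left_mono[of h 1 "2 * BA + 1"] by simp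
    moreover have "b * h \<le> b" using h by (simp add: b_def mult_left_le)
    moreover have "b \<ge> 0" by (simp add: b_def)
    ultimately show ?thesis unfolding e0 using h by (simp add: mult_mono)
  qed
  finally show ?thesis by (simp add: e_def b_def n_def)
qed

end

context odesys begin

lemma M_est:
  assumes h: "0 < h" and BA0: "BA \<ge> 0" and BF0: "BF \<ge> 0" and L20: "L2 \<ge> 0"
    and xy: "sol y h xy" and xyK: "\<forall>t\<in>{0..h}. xy t \<in> K" and yK: "y \<in> K"
    and BF: "\<forall>a\<in>K. norm (F a) \<le> BF"
    and BA: "\<forall>a\<in>K. \<forall>v. norm (A a v) \<le> BA * norm v"
    and L2: "\<forall>a\<in>K. \<forall>b\<in>K. \<forall>v. norm (A a v - A b v) \<le> L2 * norm (a - b) * norm v"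
    and m0: "m 0 = v" and md: "\<forall>t\<in>{0..h}. (m has_vector_derivative A (xy t) (m t)) (at t within {0..h})"
    and mb: "\<forall>t\<in>{0..h}. m t \<in> cball v (norm v)"
  shows "norm (m h - v - h *\<^sub>R A y v) \<le> (2 * L2 * BF + 2 * BA^2) * h^2 * norm v"
proof -
  have dy: "\<forall>t\<in>{0..h}. (xy has_vector_derivative F (xy t)) (at t within {0..h})" and y0: "xy 0 = y"
    using xy by (auto simp: sol_def)
  have mnorm: "norm (m t) \<le> 2 * norm v" if "t \<in> {0..h}" for t
  proof -
    have "norm (v - m t) \<le> norm v" using mb that by (auto simp: dist_norm)
    then show ?thesis using norm_triangle_sub[of "m t" v] by (simp add: norm_minus_commute)
  qed
  have mdiff: "norm (m t - v) \<le> (BA * (2 * norm v)) * t" if t: "t \<in> {0..h}" for t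
  proof -
    have "norm (m t - m 0) \<le> (BA * (2 * norm v)) * t"
    proof (rule vmvt[where \<phi>' = "\<lambda>s. A (xy s) (m s)"])
      fix s assume s: "s \<in> {0..t}"
      then have sh: "s \<in> {0..h}" using t by auto
      show "(m has_vector_derivative A (xy s) (m s)) (at s within {0..t})"
        using has_vector_derivative_within_subset[OF md[rule_format, OF sh], of "{0..t}"] t by auto
      have "norm (A (xy s) (m s)) \<le> BA * norm (m s)" using BA xyK sh by auto
      also have "\<dots> \<le> BA * (2 * norm v)" using mnorm[OF sh] BA0 by (intro mult_left_mono) auto
      finally show "norm (A (xy s) (m s)) \<le> BA * (2 * norm v)" .
    qed (use t in auto)
    then show ?thesis using m0 by simp
  qed
  have ydiff: "norm (xy t - y) \<le> BF * t" if t: "t \<in> {0..h}" for t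
  proof -
    have "norm (xy t - xy 0) \<le> BF * t"
    proof (rule vmvt[where \<phi>' = "\<lambda>s. F (xy s)"])
      fix s assume s: "s \<in> {0..t}"
      then have sh: "s \<in> {0..h}" using t by auto
      show "(xy has_vector_derivative F (xy s)) (at s within {0..t})"
        using has_vector_derivative_within_subset[OF dy[rule_format, OF sh], of "{0..t}"] t by auto
      show "norm (F (xy s)) \<le> BF" using BF xyK sh by auto
    qed (use t in auto)
    then show ?thesis using y0 by simp
  qed
  define C where "C = 2 * L2 * BF + 2 * BA^2"
  have "norm ((m h - v - h *\<^sub>R A y v) - (m 0 - v - 0 *\<^sub>R A y v)) \<le> (C * h * norm v) * h"
  proof (rule vmvt[where \<phi> = "\<lambda>t. m t - v - t *\<^sub>R A y v" and \<phi>' = "\<lambda>t. A (xy t) (m t) - A y v"])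
    fix t assume t: "t \<in> {0..h}"
    show "((\<lambda>t. m t - v - t *\<^sub>R A y v) has_vector_derivative A (xy t) (m t) - A y v) (at t within {0..h})"
      using md t by (auto intro!: derivative_eq_intros)
    have "A (xy t) (m t) - A y v = (A (xy t) (m t) - A y (m t)) + A y (m t - v)"
      by (simp add: linear_diff[OF Alin])
    also have "norm \<dots> \<le> norm (A (xy t) (m t) - A y (m t)) + norm (A y (m t - v))"
      by (rule norm_triangle_ineq)
    also have "\<dots> \<le> L2 * (BF * t) * (2 * norm v) + BA * ((BA * (2 * norm v)) * t)"
    proof (rule add_mono)
      have "norm (A (xy t) (m t) - A y (m t)) \<le> L2 * norm (xy t - y) * norm (m t)"
        using L2 xyK yK t by auto
      also have "\<dots> \<le> L2 * (BF * t) * (2 * norm v)"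
        using ydiff[OF t] mnorm[OF t] L20 BF0 t by (intro mult_mono mult_left_mono) auto
      finally show "norm (A (xy t) (m t) - A y (m t)) \<le> L2 * (BF * t) * (2 * norm v)" .
      have "norm (A y (m t - v)) \<le> BA * norm (m t - v)" using BA yK by auto
      also have "\<dots> \<le> BA * ((BA * (2 * norm v)) * t)" using mdiff[OF t] BA0 by (intro mult_left_mono) auto
      finally show "norm (A y (m t - v)) \<le> BA * ((BA * (2 * norm v)) * t)" .
    qed
    also have "\<dots> = C * t * norm v" by (simp add: C_def power2_eq_square algebra_simps)
    also have "\<dots> \<le> C * h * norm v" using t BA0 BF0 L20
      by (intro mult_right_mono mult_left_mono) (auto simp: C_def)
    finally show "norm (A (xy t) (m t) - A y v) \<le> C * h * norm v" .
  qed (use h in auto)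
  then show ?thesis using m0 by (simp add: C_def power2_eq_square algebra_simps)
qed

end

context odesys begin

lemma flow_main:
  shows "\<exists>h1>0. \<exists>C\<ge>0. \<exists>BA\<ge>0. \<forall>h\<in>{0<..<h1}. \<forall>y\<in>ball ystar 1.
   (\<exists>x. sol y h x) \<and> (\<forall>v. norm (A y v) \<le> BA * norm v) \<and>
   (\<exists>M. linear M \<and> (flowF h has_derivative M) (at y) \<and> (\<forall>v w. M w \<bullet> \<Omega> (M v) = w \<bullet> \<Omega> v) \<and>
        (\<forall>v. norm (M v - v - h *\<^sub>R A y v) \<le> C * h^2 * norm v))"
proof -
  define RK where "RK = norm ystar + 3"
  define K where "K = cball (0::'a) RK"
  obtain BF where BF0: "BF \<ge> 0" and BF: "\<forall>a\<in>K. norm (F a) \<le> BF" using Fbound unfolding K_def by blast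
  obtain BA where BA0: "BA \<ge> 0" and BA: "\<forall>a\<in>K. \<forall>v. norm (A a v) \<le> BA * norm v" using Abound unfolding K_def by blast
  obtain LF where LF0: "LF \<ge> 0" and LF: "\<forall>a\<in>K. \<forall>b\<in>K. norm (F a - F b) \<le> LF * norm (a - b)" using Flip unfolding K_def by blast
  obtain L2 where L20: "L2 \<ge> 0" and L2: "\<forall>a\<in>K. \<forall>b\<in>K. \<forall>v. norm (A a v - A b v) \<le> L2 * norm (a - b) * norm v" using Alip unfolding K_def by blast
  obtain Tc where Tc0: "Tc \<ge> 0" and Tc: "\<forall>a\<in>K. \<forall>b\<in>K. norm (F b - F a - A a (b - a)) \<le> Tc * (norm (b - a))^2" using Ftaylor unfolding K_def by blast
  define h1 where "h1 = 1 / (2 * (BF + BA + LF + 1))"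
  define C where "C = 2 * L2 * BF + 2 * BA^2"
  have inK: "w \<in> K" if "z \<in> ball ystar 2" "w \<in> cball z 1" for z w
  proof -
    have "norm w \<le> norm z + 1" using that(2) norm_triangle_sub[of w z] by (simp add: dist_norm norm_minus_commute)
    moreover have "norm z \<le> norm ystar + 2" using that(1) norm_triangle_sub[of z ystar] by (simp add: dist_norm norm_minus_commute)
    ultimately show ?thesis by (simp add: K_def RK_def)
  qed
  have h1pos: "h1 > 0" using BF0 BA0 LF0 by (simp add: h1_def)
  have C0: "C \<ge> 0" using BF0 BA0 L20 by (simp add: C_def)
  show ?thesis
  proof (rule exI[of _ h1], rule conjI[OF h1pos], rule exI[of _ C], rule conjI[OF C0],
      rule exI[of _ BA], rule conjI[OF BA0], intro ballI conjI)
    fix h y assume hI: "h \<in> {0<..<h1}" and y: "y \<in> ball ystar 1"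
    have h: "h > 0" using hI by simp
    have hS: "h * (2 * (BF + BA + LF + 1)) < 1" using hI BF0 BA0 LF0 by (simp add: h1_def field_simps)
    have hBF: "h * BF \<le> 1" and hBA: "h * BA \<le> 1/2" and hLF: "h * LF \<le> 1/2" and h1': "h \<le> 1"
    proof -
      have p: "0 \<le> h*BF" "0 \<le> h*BA" "0 \<le> h*LF" using h BF0 BA0 LF0 by auto
      have "2*(h*BF) + 2*(h*BA) + 2*(h*LF) + 2*h < 1" using hS by (simp add: algebra_simps)
      then show "h * BF \<le> 1" "h * BA \<le> 1/2" "h * LF \<le> 1/2" "h \<le> 1" using p h by linarith+
    qed
    have y2: "y \<in> ball ystar 2" using y by auto
    have yK: "y \<in> K" using inK[OF y2, of y] by simp
    have "\<exists>x. sol z h x \<and> (\<forall>t\<in>{0..h}. x t \<in> cball z 1)" if z: "z \<in> ball ystar 2" for z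
    proof -
      have "\<exists>x. x 0 = z \<and> (\<forall>t\<in>{0..h}. (x has_vector_derivative F (x t)) (at t within {0..h}))
           \<and> (\<forall>t\<in>{0..h}. x t \<in> cball z 1)"
      proof (rule ode_exists[where G="\<lambda>t. F" and R=1 and B=BF and L=LF])
        show "continuous_on {0..h} (\<lambda>s. F (p s))" if "continuous_on {0..h} p" for p
          by (rule continuous_on_compose2[OF Fcont that]) auto
        show "norm (F x) \<le> BF" if "x \<in> cball z 1" for x using BF inK[OF z that] by blast
        show "norm (F x - F w) \<le> LF * norm (x - w)" if "x \<in> cball z 1" "w \<in> cball z 1" for x w
          using LF inK[OF z that(1)] inK[OF z that(2)] by blast
      qed (use h LF0 hBF hLF in auto)
      then show ?thesis unfolding sol_def by blast
    qed
    then obtain X where X: "\<And>z. z \<in> ball ystar 2 \<Longrightarrow> sol z h (X z) \<and> (\<forall>t\<in>{0..h}. X z t \<in> cball z 1)"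
      by metis
    have XK: "\<forall>t\<in>{0..h}. X z t \<in> K" if "z \<in> ball ystar 2" for z using X[OF that] inK[OF that] by blast
    have flowX: "flowF h z = X z h" if "z \<in> ball ystar 2" for z using flowF_eq X[OF that] h by auto
    define \<gamma> where "\<gamma> = X y"
    have solg: "sol y h \<gamma>" using X[OF y2] by (simp add: \<gamma>_def)
    have gK: "\<forall>t\<in>{0..h}. \<gamma> t \<in> K" using XK[OF y2] by (simp add: \<gamma>_def)
    have cg: "continuous_on {0..h} \<gamma>"
      using solg unfolding sol_def by (intro vd_continuous_on[where d="\<lambda>t. F (\<gamma> t)"]) blast
    have bA: "norm (A (\<gamma> t) v) \<le> BA * norm v" if "t \<in> {0..h}" for t v using BA gK that by blast
    have "\<exists>m. m 0 = v \<and> (\<forall>t\<in>{0..h}. (m has_vector_derivative A (\<gamma> t) (m t)) (at t within {0..h}))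
            \<and> (\<forall>t\<in>{0..h}. m t \<in> cball v (norm v))" for v
      by (rule lin_ode[OF h cg BA0 bA hBA])
    then obtain m where m0: "\<And>v. m v 0 = v"
      and md: "\<And>v. \<forall>t\<in>{0..h}. (m v has_vector_derivative A (\<gamma> t) (m v t)) (at t within {0..h})"
      and mb: "\<And>v. \<forall>t\<in>{0..h}. m v t \<in> cball v (norm v)"
      by metis
    define M where "M v = m v h" for v
    have linM: "linear M" unfolding M_def[abs_def] using lin_linear[OF bA m0 md] h by auto
    show "\<exists>x. sol y h x" using solg by blast
    show "\<forall>v. norm (A y v) \<le> BA * norm v" using BA yK by blast
    show "\<exists>M. linear M \<and> (flowF h has_derivative M) (at y) \<and> (\<forall>v w. M w \<bullet> \<Omega> (M v) = w \<bullet> \<Omega> v) \<and>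
        (\<forall>v. norm (M v - v - h *\<^sub>R A y v) \<le> C * h^2 * norm v)"
    proof (intro exI[of _ M] conjI allI linM)
      fix v w
      show "M w \<bullet> \<Omega> (M v) = w \<bullet> \<Omega> v" unfolding M_def using sympl[OF h md] m0 by simp
    next
      fix v
      show "norm (M v - v - h *\<^sub>R A y v) \<le> C * h^2 * norm v"
        unfolding M_def C_def
        by (rule M_est[OF h BA0 BF0 L20 solg gK yK BF BA L2 m0 md mb])
    next
      define D where "D = sqrt (exp (2 * BA + 1) * (9 * Tc^2))"
      have est: "norm (flowF h z - flowF h y - M (z - y)) \<le> D * (norm (z - y))^2" if z: "z \<in> ball y 1" for z
      proof -
        have z2: "z \<in> ball ystar 2"
          using z y dist_triangle[of ystar z y] by (simp add: dist_commute)
        define n where "n = norm (z - y)"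
        have sq: "(norm (X z h - \<gamma> h - m (z - y) h))^2 \<le> exp (2 * BA + 1) * (9 * Tc^2 * n^4)"
          unfolding n_def
          by (rule flow_deriv_core[OF h h1' hLF BA0 LF0 conjunct1[OF X[OF z2]] solg XK[OF z2] gK LF BA Tc Tc0 m0 md])
        have "norm (X z h - \<gamma> h - m (z - y) h) = sqrt ((norm (X z h - \<gamma> h - m (z - y) h))^2)" by simp
        also have "\<dots> \<le> sqrt (exp (2 * BA + 1) * (9 * Tc^2 * n^4))" using sq by (rule real_sqrt_le_mono)
        also have "exp (2 * BA + 1) * (9 * Tc^2 * n^4) = (exp (2 * BA + 1) * (9 * Tc^2)) * (n^2)^2"
          by (simp add: power_mult[symmetric])
        also have "sqrt \<dots> = D * n^2" by (simp only: D_def real_sqrt_mult real_sqrt_abs abs_power2)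
        finally show ?thesis using flowX[OF z2] flowX[OF y2] by (simp add: M_def \<gamma>_def n_def)
      qed
      have D0: "D \<ge> 0" by (simp add: D_def)
      show "(flowF h has_derivative M) (at y)"
        unfolding has_derivative_at_alt
      proof (intro conjI allI impI)
        show "bounded_linear M" using linM linear_conv_bounded_linear by blast
        fix e :: real assume e: "e > 0"
        show "\<exists>d>0. \<forall>z. norm (z - y) < d \<longrightarrow> norm (flowF h z - flowF h y - M (z - y)) \<le> e * norm (z - y)"
        proof (intro exI[of _ "min 1 (e / (D + 1))"] conjI allI impI)
          show "0 < min 1 (e / (D + 1))" using e D0 by simp
          fix z assume zd: "norm (z - y) < min 1 (e / (D + 1))"
          have z: "z \<in> ball y 1" using zd by (simp add: dist_norm norm_minus_commute)
          have "D * norm (z - y) \<le> D * (e / (D + 1))" using zd D0 by (intro mult_left_mono) auto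
          also have "\<dots> \<le> e" using e D0 by (simp add: field_simps)
          finally have Dn: "D * norm (z - y) \<le> e" .
          have "norm (flowF h z - flowF h y - M (z - y)) \<le> D * (norm (z - y))^2" by (rule est[OF z])
          also have "\<dots> = (D * norm (z - y)) * norm (z - y)" by (simp add: power2_eq_square)
          also have "\<dots> \<le> e * norm (z - y)" using Dn by (intro mult_right_mono) auto
          finally show "norm (flowF h z - flowF h y - M (z - y)) \<le> e * norm (z - y)" .
        qed
      qed
    qed
  qed
qed

end

lemma Jinv_linear: "linear Jinv"
  by (intro linearI) (auto simp: Jinv_def)

lemma Jmat_linear: "linear Jmat"
  by (intro linearI) (auto simp: Jmat_def)

lemma Jinv_blinear: "bounded_linear Jinv"
  using Jinv_linear linear_conv_bounded_linear by blast

lemma Jmat_blinear: "bounded_linear Jmat"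
  using Jmat_linear linear_conv_bounded_linear by blast

lemma norm_Jinv[simp]: "norm (Jinv x) = norm x"
  by (simp add: Jinv_def norm_prod_def add.commute)

lemma norm_Jmat[simp]: "norm (Jmat x) = norm x"
  by (simp add: Jmat_def norm_prod_def add.commute)

lemma Jmat_Jinv[simp]: "Jmat (Jinv x) = x"
  by (simp add: Jmat_def Jinv_def)

lemma inner_Jinv_Jmat: "Jinv u \<bullet> Jmat b = - (u \<bullet> b)"
  by (simp add: Jmat_def Jinv_def inner_prod_def)

lemma inner_Jinv_swap: "u \<bullet> Jinv x = - (Jinv u \<bullet> x)"
  by (simp add: Jinv_def inner_prod_def inner_commute)

lemma inner_Jmat_swap: "Jmat a \<bullet> b = - (a \<bullet> Jmat b)"
  by (simp add: Jmat_def inner_prod_def inner_commute)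

lemma smooth_Ck: "smooth H \<Longrightarrow> Ck_on k UNIV H"
  unfolding smooth_def by blast

lemma finite_choice_mono:
  assumes "finite I" "\<And>i. i \<in> I \<Longrightarrow> \<exists>L. P i L"
    and "\<And>i L L'. P i L \<Longrightarrow> L \<le> (L'::real) \<Longrightarrow> P i L'"
  shows "\<exists>L\<ge>0. \<forall>i\<in>I. P i L"
proof -
  obtain f where f: "\<And>i. i \<in> I \<Longrightarrow> P i (f i)" using assms(2) by metis
  show ?thesis
  proof (intro exI[of _ "\<Sum>i\<in>I. \<bar>f i\<bar>"] conjI ballI)
    show "0 \<le> (\<Sum>i\<in>I. \<bar>f i\<bar>)" by (simp add: sum_nonneg)
    fix i assume i: "i \<in> I"
    have "f i \<le> \<bar>f i\<bar>" by simp
    also have "\<dots> \<le> (\<Sum>i\<in>I. \<bar>f i\<bar>)" using assms(1) i by (intro member_le_sum) auto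
    finally show "P i (\<Sum>i\<in>I. \<bar>f i\<bar>)" using assms(3) f[OF i] by blast
  qed
qed

lemma H_odesys:
  fixes H :: "(real^'n) \<times> (real^'n) \<Rightarrow> real"
  assumes sm: "smooth H"
  shows "odesys (\<lambda>y. Jinv (grad H y)) (\<lambda>y v. Jinv (hess H y v)) Jmat"
proof (rule odesys.intro)
  have C2: "Ck_on 2 UNIV H" and C3: "Ck_on 3 UNIV H" using smooth_Ck[OF sm] by auto
  fix y :: "(real^'n) \<times> (real^'n)"
  show "((\<lambda>y. Jinv (grad H y)) has_derivative (\<lambda>v. Jinv (hess H y v))) (at y)"
    using bounded_linear.has_derivative[OF Jinv_blinear grad_deriv[OF C2 open_UNIV UNIV_I]] .
next
  have C2: "Ck_on 2 UNIV H" using smooth_Ck[OF sm] by auto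
  fix b :: "(real^'n) \<times> (real^'n)" assume b: "b \<in> Basis"
  have ce: "continuous_on UNIV (pdiff c (pdiff b' H))" if "b' \<in> Basis" "c \<in> Basis" for b' c
    using ck_cont[OF C2, of "[c,b']"] that by simp
  show "continuous_on UNIV (\<lambda>y. Jinv (hess H y b))"
    unfolding hess_def
    by (intro continuous_on_compose2[OF linear_continuous_on[OF Jinv_blinear]] continuous_intros ce) auto
next
  have C3: "Ck_on 3 UNIV H" using smooth_Ck[OF sm] by auto
  fix R :: real
  define I where "I = (Basis :: ((real^'n) \<times> (real^'n)) set) \<times> (Basis :: ((real^'n) \<times> (real^'n)) set)"
  have "\<exists>L\<ge>0. \<forall>i\<in>I. \<forall>y\<in>cball 0 R. \<forall>z\<in>cball 0 R. \<bar>pdiff (snd i) (pdiff (fst i) H) y - pdiff (snd i) (pdiff (fst i) H) z\<bar> \<le> L * norm (y - z)"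
  proof (rule finite_choice_mono)
    show "finite I" by (simp add: I_def)
    fix i assume i: "i \<in> I"
    show "\<exists>L. \<forall>y\<in>cball 0 R. \<forall>z\<in>cball 0 R. \<bar>pdiff (snd i) (pdiff (fst i) H) y - pdiff (snd i) (pdiff (fst i) H) z\<bar> \<le> L * norm (y - z)"
    proof (rule C1_lipschitz_cball)
      show "(\<lambda>t. pdiff (snd i) (pdiff (fst i) H) (z + t *\<^sub>R d)) differentiable at 0" if "d \<in> Basis" for z d
        using ck_dd[OF C3, of "[snd i, fst i]" d z] i that by (auto simp: I_def)
      show "continuous_on UNIV (pdiff d (pdiff (snd i) (pdiff (fst i) H)))" if "d \<in> Basis" for d
        using ck_cont[OF C3, of "[d, snd i, fst i]"] i that by (auto simp: I_def)
    qed
  next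
    fix i L L' assume "\<forall>y\<in>cball 0 R. \<forall>z\<in>cball 0 R. \<bar>pdiff (snd i) (pdiff (fst i) H) y - pdiff (snd i) (pdiff (fst i) H) z\<bar> \<le> L * norm (y - z)"
      "L \<le> L'"
    then show "\<forall>y\<in>cball 0 R. \<forall>z\<in>cball 0 R. \<bar>pdiff (snd i) (pdiff (fst i) H) y - pdiff (snd i) (pdiff (fst i) H) z\<bar> \<le> L' * norm (y - z)"
      by (meson mult_right_mono norm_ge_zero order_trans)
  qed
  then obtain L where L0: "L \<ge> 0" and L: "\<And>b c y z. b \<in> Basis \<Longrightarrow> c \<in> Basis \<Longrightarrow> y \<in> cball 0 R \<Longrightarrow> z \<in> cball 0 R \<Longrightarrow>
      \<bar>pdiff c (pdiff b H) y - pdiff c (pdiff b H) z\<bar> \<le> L * norm (y - z)"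
  proof -
    from \<open>\<exists>L\<ge>0. _\<close> obtain L where "L \<ge> 0" and LL: "\<forall>i\<in>I. \<forall>y\<in>cball 0 R. \<forall>z\<in>cball 0 R. \<bar>pdiff (snd i) (pdiff (fst i) H) y - pdiff (snd i) (pdiff (fst i) H) z\<bar> \<le> L * norm (y - z)"
      by blast
    moreover have "\<And>b c y z. b \<in> Basis \<Longrightarrow> c \<in> Basis \<Longrightarrow> y \<in> cball 0 R \<Longrightarrow> z \<in> cball 0 R \<Longrightarrow>
      \<bar>pdiff c (pdiff b H) y - pdiff c (pdiff b H) z\<bar> \<le> L * norm (y - z)"
      using LL unfolding I_def by (metis SigmaI fst_conv snd_conv)
    ultimately show ?thesis using that by blast
  qed
  define N where "N = real (card (Basis :: ((real^'n) \<times> (real^'n)) set))"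
  show "\<exists>L\<ge>0. \<forall>y\<in>cball 0 R. \<forall>z\<in>cball 0 R. \<forall>v. norm (Jinv (hess H y v) - Jinv (hess H z v)) \<le> L * norm (y - z) * norm v"
  proof (intro exI[of _ "N * N * L"] conjI ballI allI)
    show "0 \<le> N * N * L" using L0 by (simp add: N_def)
    fix y z v assume y: "y \<in> cball (0::(real^'n) \<times> (real^'n)) R" and z: "z \<in> cball (0::(real^'n) \<times> (real^'n)) R"
    have "Jinv (hess H y v) - Jinv (hess H z v) = Jinv (hess H y v - hess H z v)"
      by (simp add: linear_diff[OF Jinv_linear])
    then have "norm (Jinv (hess H y v) - Jinv (hess H z v)) = norm (hess H y v - hess H z v)" by simp
    also have "hess H y v - hess H z v = (\<Sum>b\<in>Basis. (\<Sum>c\<in>Basis. (v \<bullet> c) * (pdiff c (pdiff b H) y - pdiff c (pdiff b H) z)) *\<^sub>R b)"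
      unfolding hess_def by (simp add: sum_subtractf[symmetric] scaleR_diff_left[symmetric] algebra_simps sum_distrib_left)
    also have "norm \<dots> \<le> (\<Sum>b\<in>Basis. norm ((\<Sum>c\<in>Basis. (v \<bullet> c) * (pdiff c (pdiff b H) y - pdiff c (pdiff b H) z)) *\<^sub>R b))"
      by (rule norm_sum)
    also have "\<dots> \<le> (\<Sum>b\<in>(Basis :: ((real^'n) \<times> (real^'n)) set). N * (L * norm (y - z) * norm v))"
    proof (rule sum_mono)
      fix b :: "(real^'n) \<times> (real^'n)" assume b: "b \<in> Basis"
      have "norm ((\<Sum>c\<in>Basis. (v \<bullet> c) * (pdiff c (pdiff b H) y - pdiff c (pdiff b H) z)) *\<^sub>R b)
          = \<bar>\<Sum>c\<in>Basis. (v \<bullet> c) * (pdiff c (pdiff b H) y - pdiff c (pdiff b H) z)\<bar>" using b by simp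
      also have "\<dots> \<le> (\<Sum>c\<in>Basis. \<bar>(v \<bullet> c) * (pdiff c (pdiff b H) y - pdiff c (pdiff b H) z)\<bar>)"
        by (rule sum_abs)
      also have "\<dots> \<le> (\<Sum>c\<in>(Basis :: ((real^'n) \<times> (real^'n)) set). L * norm (y - z) * norm v)"
      proof (rule sum_mono)
        fix c :: "(real^'n) \<times> (real^'n)" assume c: "c \<in> Basis"
        have "\<bar>(v \<bullet> c) * (pdiff c (pdiff b H) y - pdiff c (pdiff b H) z)\<bar>
            = \<bar>v \<bullet> c\<bar> * \<bar>pdiff c (pdiff b H) y - pdiff c (pdiff b H) z\<bar>" by (simp add: abs_mult)
        also have "\<dots> \<le> norm v * (L * norm (y - z))"
          using Basis_le_norm[OF c, of v] L[OF b c y z] by (intro mult_mono) auto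
        finally show "\<bar>(v \<bullet> c) * (pdiff c (pdiff b H) y - pdiff c (pdiff b H) z)\<bar> \<le> L * norm (y - z) * norm v"
          by (simp add: algebra_simps)
      qed
      also have "\<dots> = N * (L * norm (y - z) * norm v)" by (simp add: N_def)
      finally show "norm ((\<Sum>c\<in>Basis. (v \<bullet> c) * (pdiff c (pdiff b H) y - pdiff c (pdiff b H) z)) *\<^sub>R b)
          \<le> N * (L * norm (y - z) * norm v)" .
    qed
    also have "\<dots> = N * N * L * norm (y - z) * norm v" by (simp add: N_def)
    finally show "norm (Jinv (hess H y v) - Jinv (hess H z v)) \<le> N * N * L * norm (y - z) * norm v" .
  qed
next
  show "linear (Jmat :: (real^'n) \<times> (real^'n) \<Rightarrow> _)" by (rule Jmat_linear)
next
  have C2: "Ck_on 2 UNIV H" using smooth_Ck[OF sm] by auto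
  fix y a b :: "(real^'n) \<times> (real^'n)"
  show "Jinv (hess H y a) \<bullet> Jmat b + a \<bullet> Jmat (Jinv (hess H y b)) = 0"
    using hess_sym[OF C2 open_UNIV UNIV_I, of y a b] by (simp add: inner_Jinv_Jmat)
qed

lemma key:
  fixes H :: "(real^'n) \<times> (real^'n) \<Rightarrow> real" and ystar :: "(real^'n) \<times> (real^'n)"
  assumes sm: "smooth H"
  shows "\<exists>h1>0. \<exists>C\<ge>0. \<forall>h\<in>{0<..<h1}. \<forall>y\<in>ball ystar 1. (\<exists>x. flow_sol H y h x) \<and>
   (\<exists>D. linear D \<and> ((\<lambda>z. Jmat ((1 / h) *\<^sub>R (flow H h z - z))) has_derivative D) (at y) \<and>
      (\<forall>v. norm ((1/2) *\<^sub>R (D v - adjoint D v) - (h / 2) *\<^sub>R hess H y (Jinv (hess H y v))) \<le> C * h^2 * norm v))"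
proof -
  interpret S: odesys "\<lambda>y. Jinv (grad H y)" "\<lambda>y v. Jinv (hess H y v)" Jmat
    using H_odesys[OF sm] .
  have C2: "Ck_on 2 UNIV H" using smooth_Ck[OF sm] by auto
  have solEq: "S.sol = flow_sol H" by (simp add: fun_eq_iff S.sol_def flow_sol_def)
  have flowEq: "S.flowF = flow H" by (simp add: fun_eq_iff S.flowF_def flow_def solEq)
  obtain h1 C BA where h1: "h1 > 0" and C0: "C \<ge> 0" and BA0: "BA \<ge> 0" and
    main: "\<forall>h\<in>{0<..<h1}. \<forall>y\<in>ball ystar 1.
   (\<exists>x. S.sol y h x) \<and> (\<forall>v. norm (Jinv (hess H y v)) \<le> BA * norm v) \<and>
   (\<exists>M. linear M \<and> (S.flowF h has_derivative M) (at y) \<and> (\<forall>v w. M w \<bullet> Jmat (M v) = w \<bullet> Jmat v) \<and>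
        (\<forall>v. norm (M v - v - h *\<^sub>R Jinv (hess H y v)) \<le> C * h^2 * norm v))"
    using S.flow_main[of ystar] by blast
  define C' where "C' = C * (2 * BA + C) / 2"
  show ?thesis
  proof (rule exI[of _ "min h1 1"], rule conjI, simp add: h1, rule exI[of _ C'], rule conjI)
    show "C' \<ge> 0" using C0 BA0 by (simp add: C'_def)
  next
    show "\<forall>h\<in>{0<..<min h1 1}. \<forall>y\<in>ball ystar 1. (\<exists>x. flow_sol H y h x) \<and>
     (\<exists>D. linear D \<and> ((\<lambda>z. Jmat ((1 / h) *\<^sub>R (flow H h z - z))) has_derivative D) (at y) \<and>
      (\<forall>v. norm ((1/2) *\<^sub>R (D v - adjoint D v) - (h / 2) *\<^sub>R hess H y (Jinv (hess H y v))) \<le> C' * h^2 * norm v))"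
    proof (intro ballI conjI)
      fix h y assume hI: "h \<in> {0<..<min h1 1}" and y: "y \<in> ball ystar 1"
      have hh1: "h \<in> {0<..<h1}" and h: "h > 0" "h \<le> 1" using hI by auto
      note mh = main[rule_format, OF hh1 y]
      show "\<exists>x. flow_sol H y h x" using mh solEq by simp
      have BA: "\<And>v. norm (Jinv (hess H y v)) \<le> BA * norm v" using mh by blast
      obtain M where linM: "linear M" and dM: "(flow H h has_derivative M) (at y)"
        and symM: "\<And>v w. M w \<bullet> Jmat (M v) = w \<bullet> Jmat v"
        and estM: "\<And>v. norm (M v - v - h *\<^sub>R Jinv (hess H y v)) \<le> C * h^2 * norm v"
        using mh flowEq by metis
      define A where "A v = Jinv (hess H y v)" for v
      define K where "K v = (1 / h) *\<^sub>R (M v - v)" for v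
      define D where "D v = Jmat (K v)" for v
      have linK: "linear K" unfolding K_def[abs_def]
        by (intro linear_compose_scale_right linear_compose_sub linM linear_ident)
      have linD: "linear D" unfolding D_def[abs_def]
        using linear_compose[OF linK Jmat_linear] by (simp add: o_def)
      have MK: "M v = v + h *\<^sub>R K v" for v using h by (simp add: K_def)
      have Kest: "norm (K v - A v) \<le> C * h * norm v" for v
      proof -
        have "K v - A v = (1 / h) *\<^sub>R (M v - v - h *\<^sub>R A v)" using h by (simp add: K_def algebra_simps)
        then have "norm (K v - A v) = (1 / h) * norm (M v - v - h *\<^sub>R A v)" using h by simp
        also have "\<dots> \<le> (1 / h) * (C * h^2 * norm v)" using estM[of v] h by (intro mult_left_mono) (auto simp: A_def)
        also have "\<dots> = C * h * norm v" using h by (simp add: power2_eq_square)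
        finally show ?thesis .
      qed
      have Kb: "norm (K v) \<le> (BA + C) * norm v" for v
      proof -
        have "norm (K v) \<le> norm (A v) + norm (K v - A v)" by (rule norm_triangle_sub)
        also have "\<dots> \<le> BA * norm v + C * h * norm v" using BA[of v] Kest[of v] by (simp add: A_def)
        also have "\<dots> \<le> BA * norm v + C * norm v"
          using h C0 mult_left_mono[of h 1 C] by (intro add_left_mono mult_right_mono) auto
        finally show ?thesis by (simp add: algebra_simps)
      qed
      show "\<exists>D. linear D \<and> ((\<lambda>z. Jmat ((1 / h) *\<^sub>R (flow H h z - z))) has_derivative D) (at y) \<and>
        (\<forall>v. norm ((1/2) *\<^sub>R (D v - adjoint D v) - (h / 2) *\<^sub>R hess H y (Jinv (hess H y v))) \<le> C' * h^2 * norm v)"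
      proof (intro exI[of _ D] conjI allI linD)
        show "((\<lambda>z. Jmat ((1 / h) *\<^sub>R (flow H h z - z))) has_derivative D) (at y)"
          unfolding D_def[abs_def] K_def
          by (intro bounded_linear.has_derivative[OF Jmat_blinear] has_derivative_scaleR_right
              has_derivative_diff dM has_derivative_ident)
      next
        fix v
        define T where "T = (1/2) *\<^sub>R (D v - adjoint D v) - (h / 2) *\<^sub>R hess H y (Jinv (hess H y v))"
        have wT: "\<bar>w \<bullet> T\<bar> \<le> C' * h^2 * norm w * norm v" for w
        proof -
          have sy: "w \<bullet> Jmat (K v) + K w \<bullet> Jmat v = - h * (K w \<bullet> Jmat (K v))"
          proof -
            have "w \<bullet> Jmat v = M w \<bullet> Jmat (M v)" by (rule symM[symmetric])
            also have "\<dots> = (w + h *\<^sub>R K w) \<bullet> (Jmat v + h *\<^sub>R Jmat (K v))"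
              by (simp add: MK linear_add[OF Jmat_linear] linear_cmul[OF Jmat_linear])
            also have "\<dots> = w \<bullet> Jmat v + h * (w \<bullet> Jmat (K v) + K w \<bullet> Jmat v) + h * h * (K w \<bullet> Jmat (K v))"
              by (simp add: inner_add_left inner_add_right algebra_simps)
            finally have "h * (w \<bullet> Jmat (K v) + K w \<bullet> Jmat v + h * (K w \<bullet> Jmat (K v))) = 0"
              by (simp add: algebra_simps)
            then have "w \<bullet> Jmat (K v) + K w \<bullet> Jmat v + h * (K w \<bullet> Jmat (K v)) = 0"
              using h by (metis mult_eq_0_iff less_irrefl)
            then show ?thesis by linarith
          qed
          have adj: "w \<bullet> adjoint D v = - (K w \<bullet> Jmat v)"
            using adjoint_works[OF linD, of w v] by (simp add: D_def inner_Jmat_swap)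
          have hs: "w \<bullet> hess H y (Jinv (hess H y v)) = - (A w \<bullet> Jmat (A v))"
          proof -
            have "w \<bullet> hess H y (Jinv (hess H y v)) = hess H y w \<bullet> Jinv (hess H y v)"
              using hess_sym[OF C2 open_UNIV UNIV_I, of y w "Jinv (hess H y v)"] by simp
            also have "\<dots> = - (A w \<bullet> hess H y v)" by (simp add: inner_Jinv_swap A_def)
            finally show ?thesis by (simp add: A_def)
          qed
          have eq: "w \<bullet> T = - (h / 2) * (K w \<bullet> Jmat (K v) - A w \<bullet> Jmat (A v))"
            unfolding T_def using sy adj hs
            by (simp add: inner_diff_right D_def algebra_simps)
          have diffb: "\<bar>K w \<bullet> Jmat (K v) - A w \<bullet> Jmat (A v)\<bar> \<le> C * h * (2 * BA + C) * norm w * norm v"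
          proof -
            have "K w \<bullet> Jmat (K v) - A w \<bullet> Jmat (A v) = (K w - A w) \<bullet> Jmat (K v) + A w \<bullet> Jmat (K v - A v)"
              by (simp add: linear_diff[OF Jmat_linear] inner_diff_left inner_diff_right)
            also have "\<bar>\<dots>\<bar> \<le> \<bar>(K w - A w) \<bullet> Jmat (K v)\<bar> + \<bar>A w \<bullet> Jmat (K v - A v)\<bar>" by (rule abs_triangle_ineq)
            also have "\<dots> \<le> norm (K w - A w) * norm (K v) + norm (A w) * norm (K v - A v)"
              using Cauchy_Schwarz_ineq2[of "K w - A w" "Jmat (K v)"] Cauchy_Schwarz_ineq2[of "A w" "Jmat (K v - A v)"]
              by simp
            also have "\<dots> \<le> (C * h * norm w) * ((BA + C) * norm v) + (BA * norm w) * (C * h * norm v)"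
              using Kest[of w] Kb[of v] BA[of w] Kest[of v] C0 BA0 h
              by (intro add_mono mult_mono) (auto simp: A_def)
            also have "\<dots> = C * h * (2 * BA + C) * norm w * norm v" by (simp add: algebra_simps)
            finally show ?thesis .
          qed
          have "\<bar>w \<bullet> T\<bar> = (h / 2) * \<bar>K w \<bullet> Jmat (K v) - A w \<bullet> Jmat (A v)\<bar>" using eq h by (simp add: abs_mult)
          also have "\<dots> \<le> (h / 2) * (C * h * (2 * BA + C) * norm w * norm v)" using diffb h by (intro mult_left_mono) auto
          also have "\<dots> = C' * h^2 * norm w * norm v" by (simp add: C'_def power2_eq_square algebra_simps)
          finally show ?thesis .
        qed
        have "(norm T)^2 \<le> C' * h^2 * norm T * norm v"
          using wT[of T] by (simp add: power2_norm_eq_inner)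
        then have "norm T * norm T \<le> norm T * (C' * h^2 * norm v)" by (simp add: power2_eq_square algebra_simps)
        moreover have "C' * h^2 * norm v \<ge> 0" using C0 BA0 by (simp add: C'_def)
        ultimately have "norm T \<le> C' * h^2 * norm v"
        proof (cases "norm T = 0")
          case False
          then have "norm T > 0" by simp
          then show ?thesis using \<open>norm T * norm T \<le> norm T * (C' * h^2 * norm v)\<close>
            using mult_le_cancel_left_pos by blast
        qed simp
        then show "norm ((1/2) *\<^sub>R (D v - adjoint D v) - (h / 2) *\<^sub>R hess H y (Jinv (hess H y v))) \<le> C' * h^2 * norm v"
          by (simp add: T_def)
      qed
    qed
  qed
qed

theorem mainTheorem3:
  fixes H :: "(real^'n) \<times> (real^'n) \<Rightarrow> real" and ystar :: "(real^'n) \<times> (real^'n)"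
  assumes "smooth H"
    and "(\<lambda>v. hess H ystar (Jinv (hess H ystar v))) \<noteq> (\<lambda>v. 0)"
  shows "(\<exists>h0>0. \<forall>h\<in>{0<..<h0}. \<forall>W. open W \<and> ystar \<in> W \<longrightarrow>
            \<not> (\<exists>Hh. Ck_on 2 W Hh \<and>
                 (\<forall>y0\<in>W. \<exists>x. flow_sol H y0 h x \<and>
                     Jinv (grad Hh y0) = (1 / h) *\<^sub>R (x h - y0))))
       \<and> (\<exists>r>0. \<exists>h1>0. \<exists>C. \<forall>h\<in>{0<..<h1}. \<forall>y\<in>ball ystar r.
            (\<exists>x. flow_sol H y h x) \<and>
            (\<exists>D. ((\<lambda>z. Jmat ((1 / h) *\<^sub>R (flow H h z - z))) has_derivative D) (at y) \<and>
                 onorm (\<lambda>v. (1/2) *\<^sub>R (D v - adjoint D v)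
                             - (h / 2) *\<^sub>R hess H y (Jinv (hess H y v))) \<le> C * h^2))"
proof -
  note sm = assms(1)
  interpret S: odesys "\<lambda>y. Jinv (grad H y)" "\<lambda>y v. Jinv (hess H y v)" Jmat
    using H_odesys[OF sm] .
  have solEq: "S.sol = flow_sol H" by (simp add: fun_eq_iff S.sol_def flow_sol_def)
  have flowEq: "S.flowF = flow H" by (simp add: fun_eq_iff S.flowF_def flow_def solEq)
  obtain h1 C where h1: "h1 > 0" and C0: "C \<ge> 0" and K: "\<forall>h\<in>{0<..<h1}. \<forall>y\<in>ball ystar 1. (\<exists>x. flow_sol H y h x) \<and>
   (\<exists>D. linear D \<and> ((\<lambda>z. Jmat ((1 / h) *\<^sub>R (flow H h z - z))) has_derivative D) (at y) \<and>
      (\<forall>v. norm ((1/2) *\<^sub>R (D v - adjoint D v) - (h / 2) *\<^sub>R hess H y (Jinv (hess H y v))) \<le> C * h^2 * norm v))"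
    using key[OF sm, of ystar] by blast
  show ?thesis
  proof
    obtain v0 where v0: "hess H ystar (Jinv (hess H ystar v0)) \<noteq> 0" using assms(2) by (auto simp: fun_eq_iff)
    define q where "q = norm (hess H ystar (Jinv (hess H ystar v0)))"
    have q: "q > 0" using v0 by (simp add: q_def)
    define h0 where "h0 = min h1 (q / (2 * C * norm v0 + 1))"
    have "2 * C * norm v0 + 1 > 0" using C0 by (simp add: add_nonneg_pos)
    then have h0: "h0 > 0" using h1 q by (simp add: h0_def)
    show "\<exists>h0>0. \<forall>h\<in>{0<..<h0}. \<forall>W. open W \<and> ystar \<in> W \<longrightarrow>
            \<not> (\<exists>Hh. Ck_on 2 W Hh \<and>
                 (\<forall>y0\<in>W. \<exists>x. flow_sol H y0 h x \<and>
                     Jinv (grad Hh y0) = (1 / h) *\<^sub>R (x h - y0)))"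
    proof (intro exI[of _ h0] conjI h0 ballI allI impI notI)
      fix h W assume hI: "h \<in> {0<..<h0}" and W: "open W \<and> ystar \<in> W"
      assume "\<exists>Hh. Ck_on 2 W Hh \<and> (\<forall>y0\<in>W. \<exists>x. flow_sol H y0 h x \<and> Jinv (grad Hh y0) = (1 / h) *\<^sub>R (x h - y0))"
      then obtain Hh where Ck: "Ck_on 2 W Hh"
        and rel: "\<And>y0. y0 \<in> W \<Longrightarrow> \<exists>x. flow_sol H y0 h x \<and> Jinv (grad Hh y0) = (1 / h) *\<^sub>R (x h - y0)"
        by blast
      have h: "h > 0" "h < h1" "h < q / (2 * C * norm v0 + 1)" using hI by (auto simp: h0_def)
      have ys: "ystar \<in> ball ystar 1" by simp
      obtain D where linD: "linear D" and dD: "((\<lambda>z. Jmat ((1 / h) *\<^sub>R (flow H h z - z))) has_derivative D) (at ystar)"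
        and bnd: "\<And>v. norm ((1/2) *\<^sub>R (D v - adjoint D v) - (h / 2) *\<^sub>R hess H ystar (Jinv (hess H ystar v))) \<le> C * h^2 * norm v"
        using K h ys by (meson greaterThanLessThan_iff)
      have Geq: "Jmat ((1 / h) *\<^sub>R (flow H h z - z)) = grad Hh z" if z: "z \<in> W" for z
      proof -
        obtain x where x: "flow_sol H z h x" and xr: "Jinv (grad Hh z) = (1 / h) *\<^sub>R (x h - z)" using rel[OF z] by blast
        have "flow H h z = x h" using S.flowF_eq[of z h x] x h solEq flowEq by simp
        then have "Jmat ((1 / h) *\<^sub>R (flow H h z - z)) = Jmat (Jinv (grad Hh z))" using xr by simp
        then show ?thesis by simp
      qed
      have dG: "(grad Hh has_derivative hess Hh ystar) (at ystar)"
        using grad_deriv[OF Ck] W by blast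
      have "((\<lambda>z. Jmat ((1 / h) *\<^sub>R (flow H h z - z))) has_derivative hess Hh ystar) (at ystar)"
        using has_derivative_transform_within_open[OF dG, of W] W Geq by auto
      then have Deq: "D = hess Hh ystar" using has_derivative_unique[OF dD] by blast
      have adj: "adjoint D v = D v" for v
      proof -
        have "w \<bullet> adjoint D v = w \<bullet> D v" for w
          using adjoint_works[OF linD, of w v] hess_sym[OF Ck, of ystar w v] W by (simp add: Deq)
        then show ?thesis using vector_eq_ldot by blast
      qed
      have "norm ((h / 2) *\<^sub>R hess H ystar (Jinv (hess H ystar v0))) \<le> C * h^2 * norm v0"
        using bnd[of v0] by (simp add: adj)
      then have "(h / 2) * q \<le> C * h^2 * norm v0" using h by (simp add: q_def)
      then have "q \<le> 2 * C * h * norm v0" using h by (simp add: power2_eq_square field_simps)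
      moreover have "h * (2 * C * norm v0 + 1) < q"
      proof -
        have pos: "2 * C * norm v0 + 1 > 0" using C0 by (simp add: add_nonneg_pos)
        show ?thesis using h(3) pos by (simp add: pos_less_divide_eq mult.commute)
      qed
      ultimately show False using h C0 by (simp add: algebra_simps)
    qed
  next
    show "\<exists>r>0. \<exists>h1>0. \<exists>C. \<forall>h\<in>{0<..<h1}. \<forall>y\<in>ball ystar r.
            (\<exists>x. flow_sol H y h x) \<and>
            (\<exists>D. ((\<lambda>z. Jmat ((1 / h) *\<^sub>R (flow H h z - z))) has_derivative D) (at y) \<and>
                 onorm (\<lambda>v. (1/2) *\<^sub>R (D v - adjoint D v)
                             - (h / 2) *\<^sub>R hess H y (Jinv (hess H y v))) \<le> C * h^2)"
    proof (rule exI[of _ "1::real"], rule conjI[OF zero_less_one], rule exI[of _ h1], rule conjI[OF h1],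
        rule exI[of _ C], intro ballI conjI)
      fix h y assume h: "h \<in> {0<..<h1}" and y: "y \<in> ball ystar 1"
      note Ky = K[rule_format, OF h y]
      show "\<exists>x. flow_sol H y h x" using Ky by blast
      obtain D where dD: "((\<lambda>z. Jmat ((1 / h) *\<^sub>R (flow H h z - z))) has_derivative D) (at y)"
        and bnd: "\<And>v. norm ((1/2) *\<^sub>R (D v - adjoint D v) - (h / 2) *\<^sub>R hess H y (Jinv (hess H y v))) \<le> C * h^2 * norm v"
        using Ky by blast
      show "\<exists>D. ((\<lambda>z. Jmat ((1 / h) *\<^sub>R (flow H h z - z))) has_derivative D) (at y) \<and>
                 onorm (\<lambda>v. (1/2) *\<^sub>R (D v - adjoint D v)
                             - (h / 2) *\<^sub>R hess H y (Jinv (hess H y v))) \<le> C * h^2"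
        using dD bnd by (intro exI[of _ D] conjI onorm_le) auto
    qed
  qed
qed

end
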